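(* Let $\mu$ be a finite compactly supported complex Borel measure on $\mathbb{R}^d$. The following are equivalent: (a) $\mu$ is discrete; (b) $\mu_\zeta$ is discrete for all $\zeta\in S$; (c) $\mu_\zeta$ is discrete for $\sigma$-almost every $\zeta\in S$.
   Context: A measure is discrete if it is purely atomic (a countable sum of weighted point masses). $S$ is the unit sphere in $\mathbb{R}^d$ with surface measure $\sigma$; for $\zeta\in S$, $\mu_\zeta$ is the pushforward of $\mu$ under $x\mapsto x\cdot\zeta$, a measure on $\mathbb{R}$. *)

theory Defs
  imports "HOL-Analysis.Analysis"
begin

text \<open>A complex (finite) measure on the measurable space M, given as a complex-valued
  set function that is countably additive on the sets of M.  Being complex-valued it is
  automatically finite.\<close>
definition complex_measure :: "'a measure \<Rightarrow> ('a set \<Rightarrow> complex) \<Rightarrow> bool" where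
  "complex_measure M \<nu> \<longleftrightarrow>
     (\<forall>A :: nat \<Rightarrow> 'a set. range A \<subseteq> sets M \<longrightarrow> disjoint_family A \<longrightarrow>
        (\<lambda>n. \<nu> (A n)) sums \<nu> (\<Union>n. A n))"

definition compactly_supported_cmeasure :: "('a::topological_space set \<Rightarrow> complex) \<Rightarrow> bool" where
  "compactly_supported_cmeasure \<nu> \<longleftrightarrow>
     (\<exists>K. compact K \<and> (\<forall>A \<in> sets borel. A \<inter> K = {} \<longrightarrow> \<nu> A = 0))"

text \<open>Discrete (purely atomic): a countable, absolutely summable sum of weighted point masses,
  i.e. \<nu>(A) = \<Sum>_{x\<in>A} c(x) for an absolutely summable weight function c
  (whose support is then automatically countable).\<close>
definition discrete_cmeasure :: "'a measure \<Rightarrow> ('a set \<Rightarrow> complex) \<Rightarrow> bool" where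
  "discrete_cmeasure M \<nu> \<longleftrightarrow>
     (\<exists>c :: 'a \<Rightarrow> complex. (\<lambda>x. norm (c x)) summable_on UNIV \<and>
        (\<forall>A \<in> sets M. \<nu> A = (\<Sum>\<^sub>\<infinity>x\<in>A. c x)))"

definition proj_cmeasure :: "('a::real_inner set \<Rightarrow> complex) \<Rightarrow> 'a \<Rightarrow> real set \<Rightarrow> complex" where
  "proj_cmeasure \<mu> \<zeta> = (\<lambda>B. \<mu> {x. x \<bullet> \<zeta> \<in> B})"

text \<open>Surface measure on the unit sphere, via the cone construction:
  \<sigma>(A) = d \<cdot> \<lambda>_d({t x | 0 < t \<le> 1, x \<in> A}) for Borel A \<subseteq> S.\<close>
definition sphere_cone :: "'a::euclidean_space set \<Rightarrow> 'a set" where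
  "sphere_cone A = (\<lambda>(t, x). t *\<^sub>R x) ` ({0<..1} \<times> A)"

definition surface_measure :: "'a::euclidean_space measure" where
  "surface_measure = measure_of (sphere 0 1)
      {A. A \<subseteq> sphere 0 1 \<and> A \<in> sets borel}
      (\<lambda>A. of_nat DIM('a) * emeasure lborel (sphere_cone A))"

end

theory Submission
  imports Defs
begin

locale sgnm =
  fixes M :: "'a measure" and lam :: "'a set \<Rightarrow> real"
  assumes ca: "\<And>A. range A \<subseteq> sets M \<Longrightarrow> disjoint_family A \<Longrightarrow> (\<lambda>n. lam (A n)) sums lam (\<Union>n. A n)"
begin

lemma lam_empty: "lam {} = 0"
proof -
  have "(\<lambda>n. lam ((\<lambda>_. {}) n)) sums lam (\<Union>n. (\<lambda>_. {}) n)"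
    using ca[of "\<lambda>_. {}"] by (auto simp: disjoint_family_on_def)
  hence "summable (\<lambda>n. lam {})" by (simp add: sums_summable)
  hence "(\<lambda>n. lam {}) \<longlonglongrightarrow> 0" by (rule summable_LIMSEQ_zero)
  thus ?thesis by (simp add: LIMSEQ_const_iff)
qed

lemma lam_add: assumes "A \<in> sets M" "B \<in> sets M" "A \<inter> B = {}"
  shows "lam (A \<union> B) = lam A + lam B"
proof -
  have "(\<lambda>n. lam (binaryset A B n)) sums lam (\<Union>n. binaryset A B n)"
    apply (rule ca)
    using assms by (auto simp: binaryset_def disjoint_family_on_def)
  moreover have "(\<lambda>n. lam (binaryset A B n)) sums (lam A + lam B)"
    by (rule binaryset_sums) (rule lam_empty)
  ultimately show ?thesis by (simp add: range_binaryset_eq sums_unique2 UNION_eq[symmetric])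
qed

lemma lam_diff: assumes "A \<in> sets M" "B \<in> sets M" "B \<subseteq> A"
  shows "lam (A - B) = lam A - lam B"
proof -
  have "lam ((A - B) \<union> B) = lam (A - B) + lam B"
    using assms by (intro lam_add) auto
  moreover have "(A - B) \<union> B = A" using assms by auto
  ultimately show ?thesis by simp
qed

definition "pos P \<longleftrightarrow> P \<in> sets M \<and> (\<forall>E\<in>sets M. E \<subseteq> P \<longrightarrow> lam E \<ge> 0)"

lemma pos_mono: assumes "pos Q" "P \<in> sets M" "P \<subseteq> Q" shows "lam P \<le> lam Q"
proof -
  have "lam (Q - P) \<ge> 0" using assms unfolding pos_def by auto
  thus ?thesis using lam_diff[of Q P] assms unfolding pos_def by auto
qed

lemma pos_Un: assumes "pos P" "pos Q" shows "pos (P \<union> Q)"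
  unfolding pos_def
proof (intro conjI ballI impI)
  show "P \<union> Q \<in> sets M" using assms unfolding pos_def by auto
  fix E assume E: "E \<in> sets M" "E \<subseteq> P \<union> Q"
  have "E = (E \<inter> P) \<union> (E - P)" by auto
  hence "lam E = lam (E \<inter> P) + lam (E - P)"
    using lam_add[of "E \<inter> P" "E - P"] E assms unfolding pos_def
    by (metis Diff_disjoint Int_Diff_disjoint sets.Diff sets.Int)
  moreover have "E - P \<in> sets M" "E \<inter> P \<in> sets M" using E assms unfolding pos_def by auto
  moreover have "E - P \<subseteq> Q" using E by auto
  ultimately have "lam (E \<inter> P) \<ge> 0" "lam (E - P) \<ge> 0" "lam E = lam (E \<inter> P) + lam (E - P)"
    using assms unfolding pos_def by auto
  thus "lam E \<ge> 0" by simp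
qed

lemma pos_Union: fixes P :: "nat \<Rightarrow> 'a set" assumes "\<And>n. pos (P n)" shows "pos (\<Union>n. P n)"
  unfolding pos_def
proof (intro conjI ballI impI)
  have Ps: "range P \<subseteq> sets M" using assms unfolding pos_def by auto
  thus "(\<Union>n. P n) \<in> sets M" using sets.countable_nat_UN[of P M] by simp
  fix E assume E: "E \<in> sets M" "E \<subseteq> (\<Union>n. P n)"
  define D where "D n = E \<inter> disjointed P n" for n
  have "range (disjointed P) \<subseteq> sets M" using Ps by (rule sets.range_disjointed_sets)
  hence Dsets: "range D \<subseteq> sets M" unfolding D_def using E by auto
  have "disjoint_family D" unfolding D_def using disjoint_family_disjointed[of P]
    by (auto simp: disjoint_family_on_def)
  hence "(\<lambda>n. lam (D n)) sums lam (\<Union>n. D n)" using Dsets ca by blast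
  moreover have "(\<Union>n. D n) = E" unfolding D_def using E UN_disjointed_eq[of P] by auto
  moreover have "lam (D n) \<ge> 0" for n
  proof -
    have "D n \<in> sets M" "D n \<subseteq> P n" using Dsets disjointed_subset[of P n] unfolding D_def by auto
    thus ?thesis using assms[of n] unfolding pos_def by blast
  qed
  ultimately show "lam E \<ge> 0" using sums_le[of "\<lambda>_. 0" "\<lambda>n. lam (D n)" 0 "lam E"] by auto
qed

lemma pos_empty: "pos {}" unfolding pos_def by (auto simp: lam_empty)

lemma pos_exists:
  assumes A: "A \<in> sets M" "lam A > 0"
  shows "\<exists>P. pos P \<and> P \<subseteq> A \<and> lam P \<ge> lam A"
proof -
  define bad where "bad X n \<longleftrightarrow> (\<exists>E\<in>sets M. E \<subseteq> X \<and> lam E < - 1 / real (Suc n))" for X n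
  define pick where "pick X = (if (\<exists>n. bad X n) then
      (SOME E. E\<in>sets M \<and> E \<subseteq> X \<and> lam E < - 1 / real (Suc (LEAST n. bad X n))) else {})" for X
  have pick: "pick X \<in> sets M \<and> pick X \<subseteq> X \<and> lam (pick X) \<le> 0 \<and>
     (\<forall>n. bad X n \<longrightarrow> lam (pick X) < - 1 / real (Suc n))" for X
  proof (cases "\<exists>n. bad X n")
    case True
    define m where "m = (LEAST n. bad X n)"
    have bm: "bad X m" unfolding m_def using True by (metis LeastI)
    have ex: "\<exists>E. E\<in>sets M \<and> E \<subseteq> X \<and> lam E < - 1 / real (Suc m)" using bm unfolding bad_def by auto
    have pe: "pick X \<in> sets M \<and> pick X \<subseteq> X \<and> lam (pick X) < - 1 / real (Suc m)"
      unfolding pick_def m_def[symmetric] using True someI_ex[OF ex] by simp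
    have "lam (pick X) < - 1 / real (Suc n)" if "bad X n" for n
    proof -
      have "m \<le> n" unfolding m_def using that by (rule Least_le)
      hence "- 1 / real (Suc m) \<le> - 1 / real (Suc n)" by (simp add: frac_le)
      thus ?thesis using pe by linarith
    qed
    moreover have "- 1 / real (Suc m) \<le> 0" by simp
    hence "lam (pick X) \<le> 0" using pe by linarith
    ultimately show ?thesis using pe by auto
  next
    case False thus ?thesis unfolding pick_def by (auto simp: lam_empty)
  qed
  define X where "X k = ((\<lambda>Y. Y - pick Y) ^^ k) A" for k
  define E where "E k = pick (X k)" for k
  have X_Suc: "X (Suc k) = X k - E k" for k unfolding X_def E_def by simp
  have Xs: "X k \<in> sets M" for k
    by (induction k) (auto simp: X_Suc E_def pick A X_def[of 0])
  have Es: "E k \<in> sets M" "E k \<subseteq> X k" "lam (E k) \<le> 0" for k unfolding E_def using pick by auto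
  have Xdec: "X (k + j) \<subseteq> X k" for k j
    by (induction j) (auto simp: X_Suc)
  have XA: "X k \<subseteq> A" for k using Xdec[of 0 k] by (simp add: X_def)
  have disj: "disjoint_family E"
  proof (unfold disjoint_family_on_def, intro ballI impI)
    fix i j :: nat assume "i \<noteq> j"
    have *: "E i \<inter> E j = {}" if "i < j" for i j
    proof -
      have "E j \<subseteq> X (Suc i)" using Es(2)[of j] Xdec[of "Suc i" "j - Suc i"] that by auto
      thus ?thesis using X_Suc[of i] by auto
    qed
    show "E i \<inter> E j = {}" using \<open>i \<noteq> j\<close> *[of i j] *[of j i] by (cases "i < j") auto
  qed
  have sm: "(\<lambda>n. lam (E n)) sums lam (\<Union>n. E n)" using ca disj Es by auto
  define P where "P = A - (\<Union>n. E n)"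
  have UEs: "(\<Union>n. E n) \<in> sets M" using Es by auto
  have UEA: "(\<Union>n. E n) \<subseteq> A" using Es XA by blast
  have lamU: "lam (\<Union>n. E n) \<le> 0" using sm Es sums_le[of "\<lambda>n. lam (E n)" "\<lambda>_. 0"] by auto
  have lamP: "lam P = lam A - lam (\<Union>n. E n)" unfolding P_def using lam_diff UEs UEA A by auto
  have PX: "P \<subseteq> X k" for k
  proof (induction k)
    case 0 thus ?case by (auto simp: P_def X_def)
  next
    case (Suc k) thus ?case using X_Suc[of k] unfolding P_def by auto
  qed
  have Ps: "P \<in> sets M" unfolding P_def using A UEs by auto
  have lim0: "(\<lambda>n. lam (E n)) \<longlonglongrightarrow> 0" using sm summable_LIMSEQ_zero sums_summable by blast
  have "pos P" unfolding pos_def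
  proof (intro conjI ballI impI Ps)
    fix F assume F: "F \<in> sets M" "F \<subseteq> P"
    show "lam F \<ge> 0"
    proof (rule ccontr)
      assume "\<not> lam F \<ge> 0"
      hence "- lam F > 0" by simp
      then obtain n where n: "1 / real (Suc n) < - lam F"
        using reals_Archimedean[of "- lam F"] by (auto simp: inverse_eq_divide)
      have "bad (X k) n" for k unfolding bad_def using F PX[of k] n by (intro bexI[of _ F]) auto
      hence "lam (E k) < - 1 / real (Suc n)" for k unfolding E_def using pick by blast
      hence "\<not> (\<lambda>k. lam (E k)) \<longlonglongrightarrow> 0"
      proof -
        assume h: "\<And>k. lam (E k) < - 1 / real (Suc n)"
        show ?thesis
        proof
          assume "(\<lambda>k. lam (E k)) \<longlonglongrightarrow> 0"
          hence "0 \<le> - 1 / real (Suc n)"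
            by (rule LIMSEQ_le_const2) (use h less_imp_le in auto)
          thus False by simp
        qed
      qed
      thus False using lim0 by simp
    qed
  qed
  moreover have "lam P \<ge> lam A" using lamP lamU by simp
  moreover have "P \<subseteq> A" unfolding P_def by auto
  ultimately show ?thesis by blast
qed

theorem hahn: "\<exists>P. pos P \<and> (\<forall>E\<in>sets M. E \<inter> P = {} \<longrightarrow> lam E \<le> 0)"
proof -
  let ?S = "lam ` Collect pos"
  have bdd: "bdd_above ?S"
  proof (rule ccontr)
    assume "\<not> bdd_above ?S"
    hence "\<forall>n::nat. \<exists>P. pos P \<and> lam P > real n"
      unfolding bdd_above_def by (auto simp: not_le)
    then obtain P where P: "\<And>n. pos (P n)" "\<And>n. lam (P n) > real n" by metis
    have Q: "pos (\<Union>n. P n)" using P pos_Union by blast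
    have "lam (P n) \<le> lam (\<Union>n. P n)" for n using pos_mono[OF Q] P(1)[of n] unfolding pos_def by auto
    moreover obtain n where "real n > lam (\<Union>n. P n)" using reals_Archimedean2 by blast
    ultimately show False using P(2) by (meson less_trans not_less)
  qed
  define s where "s = Sup ?S"
  have Sne: "?S \<noteq> {}" using pos_empty by auto
  have "\<forall>n::nat. \<exists>P. pos P \<and> lam P > s - 1 / real (Suc n)"
  proof
    fix n :: nat
    have "s - 1 / real (Suc n) < s" by simp
    then obtain y where "y \<in> ?S" "s - 1 / real (Suc n) < y"
      using less_cSup_iff[OF Sne bdd] unfolding s_def by blast
    thus "\<exists>P. pos P \<and> lam P > s - 1 / real (Suc n)" by auto
  qed
  then obtain P where P: "\<And>n. pos (P n)" "\<And>n. lam (P n) > s - 1 / real (Suc n)" by metis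
  define Q where "Q = (\<Union>n. P n)"
  have Q: "pos Q" using P pos_Union unfolding Q_def by blast
  have le: "lam (P n) \<le> lam Q" for n using pos_mono[OF Q] P(1)[of n] unfolding pos_def Q_def by auto
  have Qs: "lam Q \<le> s" unfolding s_def using Q bdd by (auto intro: cSup_upper)
  have Qge: "lam Q \<ge> s"
  proof (rule ccontr)
    assume "\<not> lam Q \<ge> s"
    hence "s - lam Q > 0" by simp
    then obtain n where "inverse (real (Suc n)) < s - lam Q"
      using reals_Archimedean by blast
    hence "1 / real (Suc n) < s - lam Q" by (simp add: inverse_eq_divide)
    thus False using le[of n] P(2)[of n] by simp
  qed
  have "\<forall>E\<in>sets M. E \<inter> Q = {} \<longrightarrow> lam E \<le> 0"
  proof (intro ballI impI)
    fix E assume E: "E \<in> sets M" "E \<inter> Q = {}"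
    show "lam E \<le> 0"
    proof (rule ccontr)
      assume "\<not> lam E \<le> 0"
      then obtain P' where P': "pos P'" "P' \<subseteq> E" "lam P' \<ge> lam E" using pos_exists E by force
      have "pos (Q \<union> P')" using pos_Un Q P' by blast
      moreover have "lam (Q \<union> P') = lam Q + lam P'"
        using lam_add[of Q P'] Q P' E unfolding pos_def by auto
      ultimately have "lam Q + lam P' \<le> s" unfolding s_def using bdd by (metis cSup_upper imageI mem_Collect_eq)
      thus False using Qge P' \<open>\<not> lam E \<le> 0\<close> by simp
    qed
  qed
  thus ?thesis using Q by blast
qed

end

lemma mk_measure:
  fixes f :: "'a set \<Rightarrow> real"
  assumes nn': "\<forall>A\<in>sets M. f A \<ge> 0"
    and ca': "\<forall>A. range A \<subseteq> sets M \<longrightarrow> disjoint_family A \<longrightarrow> (\<lambda>n. f (A n)) sums f (\<Union>n. A n)"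
    and fe: "f {} = 0"
  defines "N \<equiv> measure_of (space M) (sets M) (\<lambda>A. ennreal (f A))"
  shows "sets N = sets M" "\<And>A. A \<in> sets M \<Longrightarrow> emeasure N A = ennreal (f A)"
    "\<And>A. A \<in> sets M \<Longrightarrow> measure N A = f A" "finite_measure N"
proof -
  note nn = nn'[rule_format] and ca = ca'[rule_format]
  show sN: "sets N = sets M" unfolding N_def by simp
  have pos: "positive (sets M) (\<lambda>A. ennreal (f A))" unfolding positive_def using fe by simp
  have cadd: "countably_additive (sets M) (\<lambda>A. ennreal (f A))"
    unfolding countably_additive_def
  proof (intro allI impI)
    fix A :: "nat \<Rightarrow> 'a set" assume A: "range A \<subseteq> sets M" "disjoint_family A" "\<Union> (range A) \<in> sets M"
    have s: "(\<lambda>n. f (A n)) sums f (\<Union>n. A n)" using ca A by blast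
    have "(\<lambda>n. ennreal (f (A n))) sums ennreal (f (\<Union>n. A n))"
      using s nn A by (subst sums_ennreal) auto
    thus "(\<Sum>i. ennreal (f (A i))) = ennreal (f (\<Union> (range A)))" by (simp add: sums_iff)
  qed
  show em: "emeasure N A = ennreal (f A)" if "A \<in> sets M" for A
    unfolding N_def by (rule emeasure_measure_of_sigma[OF sets.sigma_algebra_axioms pos cadd that])
  show "measure N A = f A" if "A \<in> sets M" for A
    using em[OF that] nn[OF that] by (simp add: measure_def)
  show "finite_measure N"
  proof (rule finite_measureI)
    have "space N = space M" using sN by (rule sets_eq_imp_space_eq)
    thus "emeasure N (space N) \<noteq> \<infinity>" using em[of "space M"] by simp
  qed
qed

context sgnm begin

theorem jordan:
  "\<exists>M1 M2. finite_measure M1 \<and> finite_measure M2 \<and> sets M1 = sets M \<and> sets M2 = sets M \<and>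
     (\<forall>A\<in>sets M. lam A = measure M1 A - measure M2 A) \<and>
     (\<forall>A\<in>sets M. (\<forall>B\<in>sets M. B \<subseteq> A \<longrightarrow> lam B = 0) \<longrightarrow> emeasure M1 A = 0 \<and> emeasure M2 A = 0)"
proof -
  obtain P where P: "pos P" "\<And>E. E \<in> sets M \<Longrightarrow> E \<inter> P = {} \<Longrightarrow> lam E \<le> 0"
    using hahn by blast
  have Ps: "P \<in> sets M" using P unfolding pos_def by auto
  define f1 where "f1 A = lam (A \<inter> P)" for A
  define f2 where "f2 A = - lam (A - P)" for A
  have ca1: "(\<lambda>n. f1 (A n)) sums f1 (\<Union>n. A n)" if "range A \<subseteq> sets M" "disjoint_family A" for A
  proof -
    have "(\<lambda>n. lam ((\<lambda>n. A n \<inter> P) n)) sums lam (\<Union>n. (\<lambda>n. A n \<inter> P) n)"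
      using that Ps by (intro ca) (auto simp: disjoint_family_on_def)
    thus ?thesis unfolding f1_def by simp
  qed
  have ca2: "(\<lambda>n. f2 (A n)) sums f2 (\<Union>n. A n)" if "range A \<subseteq> sets M" "disjoint_family A" for A
  proof -
    have "(\<lambda>n. lam ((\<lambda>n. A n - P) n)) sums lam (\<Union>n. (\<lambda>n. A n - P) n)"
      using that Ps by (intro ca) (auto simp: disjoint_family_on_def)
    hence "(\<lambda>n. - lam (A n - P)) sums - lam (\<Union>n. A n - P)" by (rule sums_minus)
    thus ?thesis unfolding f2_def by simp
  qed
  have nn1: "f1 A \<ge> 0" if "A \<in> sets M" for A using P that Ps unfolding f1_def pos_def by auto
  have nn2: "f2 A \<ge> 0" if "A \<in> sets M" for A using P(2)[of "A - P"] that Ps unfolding f2_def by auto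
  define M1 where "M1 = measure_of (space M) (sets M) (\<lambda>A. ennreal (f1 A))"
  define M2 where "M2 = measure_of (space M) (sets M) (\<lambda>A. ennreal (f2 A))"
  have e1: "f1 {} = 0" "f2 {} = 0" by (auto simp: f1_def f2_def lam_empty)
  have m1: "sets M1 = sets M" "\<And>A. A \<in> sets M \<Longrightarrow> emeasure M1 A = ennreal (f1 A)"
    "\<And>A. A \<in> sets M \<Longrightarrow> measure M1 A = f1 A" "finite_measure M1"
    unfolding M1_def using mk_measure[of M f1, OF _ _ e1(1)] nn1 ca1 by auto
  have m2: "sets M2 = sets M" "\<And>A. A \<in> sets M \<Longrightarrow> emeasure M2 A = ennreal (f2 A)"
    "\<And>A. A \<in> sets M \<Longrightarrow> measure M2 A = f2 A" "finite_measure M2"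
    unfolding M2_def using mk_measure[of M f2, OF _ _ e1(2)] nn2 ca2 by auto
  have "lam A = measure M1 A - measure M2 A" if "A \<in> sets M" for A
  proof -
    have "lam A = lam (A \<inter> P) + lam (A - P)" using lam_add[of "A \<inter> P" "A - P"] that Ps
      by (metis Diff_disjoint Int_Diff_Un Int_Diff_disjoint Int_commute sets.Diff sets.Int)
    thus ?thesis using m1(3)[OF that] m2(3)[OF that] unfolding f1_def f2_def by simp
  qed
  moreover have "emeasure M1 A = 0 \<and> emeasure M2 A = 0"
    if "A \<in> sets M" "\<forall>B\<in>sets M. B \<subseteq> A \<longrightarrow> lam B = 0" for A
  proof -
    have "lam (A \<inter> P) = 0" "lam (A - P) = 0" using that Ps by auto
    thus ?thesis using m1(2)[OF that(1)] m2(2)[OF that(1)] unfolding f1_def f2_def by simp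
  qed
  ultimately show ?thesis using m1(1,4) m2(1,4) by blast
qed

end

lemma sphere_cone_iff:
  fixes A :: "'a::euclidean_space set"
  assumes "A \<subseteq> sphere 0 1"
  shows "y \<in> sphere_cone A \<longleftrightarrow> y \<noteq> 0 \<and> norm y \<le> 1 \<and> y /\<^sub>R norm y \<in> A"
proof
  assume "y \<in> sphere_cone A"
  then obtain t x where tx: "t \<in> {0<..1}" "x \<in> A" "y = t *\<^sub>R x" unfolding sphere_cone_def by auto
  have nx: "norm x = 1" using tx assms by auto
  have ny: "norm y = t" using tx nx by simp
  show "y \<noteq> 0 \<and> norm y \<le> 1 \<and> y /\<^sub>R norm y \<in> A" using tx nx ny by auto
next
  assume h: "y \<noteq> 0 \<and> norm y \<le> 1 \<and> y /\<^sub>R norm y \<in> A"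
  hence "y = (\<lambda>(t, x). t *\<^sub>R x) (norm y, y /\<^sub>R norm y)" by simp
  moreover have "(norm y, y /\<^sub>R norm y) \<in> {0<..1} \<times> A" using h by auto
  ultimately show "y \<in> sphere_cone A" unfolding sphere_cone_def by blast
qed

lemma sphere_cone_eq:
  fixes A :: "'a::euclidean_space set"
  assumes "A \<subseteq> sphere 0 1"
  shows "sphere_cone A = {y. y \<noteq> 0 \<and> norm y \<le> 1} \<inter> (\<lambda>y. y /\<^sub>R norm y) -` A"
  using sphere_cone_iff[OF assms] by auto

lemma sphere_cone_borel:
  fixes A :: "'a::euclidean_space set"
  assumes "A \<subseteq> sphere 0 1" "A \<in> sets borel"
  shows "sphere_cone A \<in> sets borel"
proof -
  have m: "(\<lambda>y::'a. y /\<^sub>R norm y) \<in> borel_measurable borel" by measurable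
  hence "(\<lambda>y::'a. y /\<^sub>R norm y) -` A \<inter> space borel \<in> sets borel" using assms(2) by (rule measurable_sets)
  moreover have "{y::'a. y \<noteq> 0 \<and> norm y \<le> 1} \<in> sets borel" by measurable
  ultimately show ?thesis unfolding sphere_cone_eq[OF assms(1)] by auto
qed

lemma sphere_cone_mono: "A \<subseteq> B \<Longrightarrow> sphere_cone A \<subseteq> sphere_cone B"
  unfolding sphere_cone_def by auto

lemma sphere_cone_UN: "sphere_cone (\<Union>i. A i) = (\<Union>i. sphere_cone (A i))"
  unfolding sphere_cone_def by auto

lemma sphere_cone_disj:
  fixes A B :: "'a::euclidean_space set"
  assumes "A \<subseteq> sphere 0 1" "B \<subseteq> sphere 0 1" "A \<inter> B = {}"
  shows "sphere_cone A \<inter> sphere_cone B = {}"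
  using sphere_cone_iff[OF assms(1)] sphere_cone_iff[OF assms(2)] assms(3) by auto

lemma sets_sphere_borel:
  "sets (restrict_space borel (sphere (0::'a::euclidean_space) 1)) = {A. A \<subseteq> sphere 0 1 \<and> A \<in> sets borel}"
  by (auto simp: sets_restrict_space_iff subset_eq)

lemma surface_measure_facts:
  shows "sets (surface_measure :: 'a::euclidean_space measure) = sets (restrict_space borel (sphere 0 1))"
    and "space (surface_measure :: 'a::euclidean_space measure) = sphere 0 1"
    and "\<And>A. A \<in> sets (surface_measure :: 'a::euclidean_space measure) \<Longrightarrow>
      emeasure surface_measure A = of_nat DIM('a) * emeasure lborel (sphere_cone A)"
proof -
  let ?S = "{A. A \<subseteq> sphere (0::'a) 1 \<and> A \<in> sets borel}"
  have sa: "sigma_algebra (sphere (0::'a) 1) ?S"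
    using sets.sigma_algebra_axioms[of "restrict_space borel (sphere (0::'a) 1)"]
    unfolding sets_sphere_borel by (simp add: space_restrict_space)
  have sS: "sets (surface_measure :: 'a measure) = ?S"
    unfolding surface_measure_def using sa by (simp add: sigma_algebra.sets_measure_of_eq)
  thus "sets (surface_measure :: 'a::euclidean_space measure) = sets (restrict_space borel (sphere 0 1))"
    by (simp only: sS sets_sphere_borel)
  show "space (surface_measure :: 'a::euclidean_space measure) = sphere 0 1"
    unfolding surface_measure_def by (simp add: space_measure_of_conv)
  let ?mu = "\<lambda>A. of_nat DIM('a) * emeasure lborel (sphere_cone (A::'a set))"
  have pos: "positive ?S ?mu" unfolding positive_def sphere_cone_def by simp
  have ca: "countably_additive ?S ?mu"
    unfolding countably_additive_def
  proof (intro allI impI)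
    fix A :: "nat \<Rightarrow> 'a set" assume A: "range A \<subseteq> ?S" "disjoint_family A" "\<Union> (range A) \<in> ?S"
    have "A i \<subseteq> sphere 0 1" "A i \<in> sets borel" for i using A(1) by auto
    hence "sphere_cone (A i) \<in> sets borel" for i by (intro sphere_cone_borel)
    hence "range (\<lambda>i. sphere_cone (A i)) \<subseteq> sets lborel" by auto
    moreover have "disjoint_family (\<lambda>i. sphere_cone (A i))"
      using A sphere_cone_disj unfolding disjoint_family_on_def by (metis (no_types, lifting) UNIV_I image_subset_iff mem_Collect_eq)
    ultimately have "(\<Sum>i. emeasure lborel (sphere_cone (A i))) = emeasure lborel (\<Union>i. sphere_cone (A i))"
      by (rule suminf_emeasure)
    thus "(\<Sum>i. ?mu (A i)) = ?mu (\<Union> (range A))"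
      by (simp add: ennreal_suminf_cmult sphere_cone_UN)
  qed
  show "emeasure surface_measure A = of_nat DIM('a) * emeasure lborel (sphere_cone A)"
    if "A \<in> sets (surface_measure :: 'a::euclidean_space measure)" for A
    unfolding surface_measure_def
    by (rule emeasure_measure_of_sigma[OF sa pos ca]) (use that sS in auto)
qed

lemma surface_null_great:
  fixes v :: "'a::euclidean_space"
  assumes "v \<noteq> 0"
  shows "emeasure (surface_measure :: 'a measure) {z\<in>sphere 0 1. z \<bullet> v = 0} = 0"
proof -
  let ?A = "{z\<in>sphere (0::'a) 1. z \<bullet> v = 0}"
  have Ab: "?A \<in> sets borel" by measurable
  have As: "?A \<in> sets (surface_measure :: 'a measure)"
    using Ab by (auto simp: surface_measure_facts(1) sets_restrict_space_iff)
  have sub: "sphere_cone ?A \<subseteq> {x. v \<bullet> x = 0}"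
    unfolding sphere_cone_def by (auto simp: inner_commute)
  have "negligible {x::'a. v \<bullet> x = 0}" using negligible_hyperplane assms by blast
  hence "{x::'a. v \<bullet> x = 0} \<in> null_sets lebesgue" by (simp add: negligible_iff_null_sets)
  moreover have "{x::'a. v \<bullet> x = 0} \<in> sets lborel" by measurable
  ultimately have nH: "{x::'a. v \<bullet> x = 0} \<in> null_sets lborel" using null_sets_completion_iff by blast
  have "?A \<subseteq> sphere 0 1" by auto
  hence "sphere_cone ?A \<in> sets lborel" using sphere_cone_borel[of ?A] Ab by simp
  hence "sphere_cone ?A \<in> null_sets lborel" using null_sets_subset[OF nH _ sub] by simp
  hence "emeasure lborel (sphere_cone ?A) = 0" by auto
  thus ?thesis using surface_measure_facts(3)[OF As] by simp
qed

lemma surface_finite: "emeasure (surface_measure :: 'a::euclidean_space measure) (sphere 0 1) < \<infinity>"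
proof -
  have sb: "sphere (0::'a) 1 \<in> sets borel" by measurable
  have Ss: "sphere (0::'a) 1 \<in> sets (surface_measure :: 'a measure)"
    using sb by (simp add: surface_measure_facts(1) sets_restrict_space_iff)
  have "sphere_cone (sphere (0::'a) 1) \<subseteq> ball 0 2" unfolding sphere_cone_def by auto
  hence "emeasure lborel (sphere_cone (sphere (0::'a) 1)) \<le> emeasure lborel (ball (0::'a) 2)"
    by (intro emeasure_mono) auto
  also have "\<dots> < \<infinity>" by (rule emeasure_lborel_ball_finite)
  finally show ?thesis using surface_measure_facts(3)[OF Ss] by (simp add: ennreal_mult_less_top of_nat_less_top)
qed

lemma surface_cap_pos:
  fixes z0 :: "'a::euclidean_space"
  assumes "z0 \<in> sphere 0 1" "r > 0"
  shows "emeasure (surface_measure :: 'a measure) (sphere 0 1 \<inter> ball z0 r) > 0"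
proof -
  let ?A = "sphere (0::'a) 1 \<inter> ball z0 r"
  have Ab: "?A \<in> sets borel" by measurable
  have As: "?A \<in> sets (surface_measure :: 'a measure)"
    using Ab by (auto simp: surface_measure_facts(1) sets_restrict_space_iff)
  define d where "d = min (1/4) (r/4)"
  have d: "d > 0" "d \<le> 1/4" "4 * d \<le> r" using assms unfolding d_def by auto
  have sub: "ball (z0 /\<^sub>R 2) d \<subseteq> sphere_cone ?A"
  proof
    fix y assume y: "y \<in> ball (z0 /\<^sub>R 2) d"
    have nz: "norm z0 = 1" using assms by simp
    have dy: "norm (y - z0 /\<^sub>R 2) < d" using y by (simp add: dist_norm norm_minus_commute)
    have "\<bar>norm y - norm (z0 /\<^sub>R 2)\<bar> \<le> norm (y - z0 /\<^sub>R 2)" by (rule norm_triangle_ineq3)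
    hence ny: "\<bar>norm y - 1/2\<bar> < d" using dy nz by simp
    hence ny0: "norm y > 0" "norm y \<le> 1" using d by auto
    have "y /\<^sub>R norm y - z0 = (y /\<^sub>R norm y - 2 *\<^sub>R y) + 2 *\<^sub>R (y - z0 /\<^sub>R 2)"
      by (simp add: algebra_simps)
    hence "norm (y /\<^sub>R norm y - z0) \<le> norm (y /\<^sub>R norm y - 2 *\<^sub>R y) + norm (2 *\<^sub>R (y - z0 /\<^sub>R 2))"
      by (metis norm_triangle_ineq)
    also have "norm (y /\<^sub>R norm y - 2 *\<^sub>R y) = \<bar>1 - 2 * norm y\<bar>"
    proof -
      have "y /\<^sub>R norm y - 2 *\<^sub>R y = (1 / norm y - 2) *\<^sub>R y" by (simp add: algebra_simps divide_inverse)
      hence "norm (y /\<^sub>R norm y - 2 *\<^sub>R y) = \<bar>1 / norm y - 2\<bar> * norm y" by simp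
      also have "\<dots> = \<bar>(1 / norm y - 2) * norm y\<bar>" by (simp add: abs_mult)
      also have "(1 / norm y - 2) * norm y = 1 - 2 * norm y" using ny0 by (simp add: field_simps)
      finally show ?thesis by simp
    qed
    also have "norm (2 *\<^sub>R (y - z0 /\<^sub>R 2)) = 2 * norm (y - z0 /\<^sub>R 2)" by simp
    finally have "norm (y /\<^sub>R norm y - z0) < 4 * d" using ny dy by linarith
    hence "dist z0 (y /\<^sub>R norm y) < r" using d by (simp add: dist_norm norm_minus_commute)
    moreover have "norm (y /\<^sub>R norm y) = 1" using ny0 by simp
    ultimately have "y /\<^sub>R norm y \<in> ?A" by simp
    thus "y \<in> sphere_cone ?A" using sphere_cone_iff[of ?A y] ny0 by auto
  qed
  have "0 < emeasure lborel (ball (z0 /\<^sub>R 2) d)"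
    using d by (simp add: emeasure_ball unit_ball_vol_pos ennreal_less_zero_iff)
  also have "\<dots> \<le> emeasure lborel (sphere_cone ?A)"
    using sub sphere_cone_borel[of ?A] Ab by (intro emeasure_mono) auto
  finally have "0 < emeasure lborel (sphere_cone ?A)" .
  thus ?thesis using surface_measure_facts(3)[OF As] by (simp add: ennreal_zero_less_mult_iff)
qed


lemma surface_finite_measure: "finite_measure (surface_measure :: 'a::euclidean_space measure)"
proof (rule finite_measureI)
  have "emeasure (surface_measure::'a measure) (sphere 0 1) < \<infinity>" by (rule surface_finite)
  thus "emeasure (surface_measure::'a measure) (space surface_measure) \<noteq> \<infinity>"
    by (simp add: surface_measure_facts(2))
qed

lemma surface_ident_measurable:
  "(\<lambda>z. z) \<in> (surface_measure :: 'a::euclidean_space measure) \<rightarrow>\<^sub>M borel"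
  by (subst measurable_cong_sets[OF surface_measure_facts(1) refl])
     (rule measurable_restrict_space1, rule measurable_ident_sets, rule refl)

lemma diffuse_hyper:
  fixes N :: "'a::euclidean_space measure"
  assumes fN: "finite_measure N" and sN: "sets N = sets borel" and dif: "\<And>x. emeasure N {x} = 0"
  shows "AE z in surface_measure. \<forall>t. emeasure N {x. x \<bullet> z = t} = 0"
proof -
  interpret N: finite_measure N by fact
  interpret S: finite_measure "surface_measure :: 'a measure" by (rule surface_finite_measure)
  let ?P = "N \<Otimes>\<^sub>M N"
  interpret P: pair_sigma_finite N N ..
  interpret P2: finite_measure ?P
    by (rule finite_measure_pair_measure) (fact fN)+
  interpret SP: pair_sigma_finite "surface_measure :: 'a measure" ?P ..
  have spN: "space N = UNIV" using sN by (simp add: sets_eq_imp_space_eq)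
  let ?g = "\<lambda>w::'a \<times> 'a \<times> 'a. (fst (snd w) - snd (snd w)) \<bullet> fst w"
  have gm: "?g \<in> borel_measurable (surface_measure \<Otimes>\<^sub>M ?P)"
  proof -
    have f1: "(\<lambda>w. fst w) \<in> (surface_measure \<Otimes>\<^sub>M ?P) \<rightarrow>\<^sub>M borel"
      using measurable_comp[OF measurable_fst surface_ident_measurable] by (simp add: comp_def)
    have mc: "measurable M N = measurable M borel" for M :: "('a \<times> 'a \<times> 'a) measure"
      by (rule measurable_cong_sets[OF refl sN])
    have eq: "(surface_measure \<Otimes>\<^sub>M ?P) \<rightarrow>\<^sub>M N = (surface_measure \<Otimes>\<^sub>M ?P) \<rightarrow>\<^sub>M borel"
      by (rule measurable_cong_sets[OF refl sN])
    have "(\<lambda>w. fst (snd w)) \<in> (surface_measure \<Otimes>\<^sub>M ?P) \<rightarrow>\<^sub>M N" by measurable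
    hence f2: "(\<lambda>w. fst (snd w)) \<in> (surface_measure \<Otimes>\<^sub>M ?P) \<rightarrow>\<^sub>M borel" by (simp only: eq)
    have "(\<lambda>w. snd (snd w)) \<in> (surface_measure \<Otimes>\<^sub>M ?P) \<rightarrow>\<^sub>M N" by measurable
    hence f3: "(\<lambda>w. snd (snd w)) \<in> (surface_measure \<Otimes>\<^sub>M ?P) \<rightarrow>\<^sub>M borel" by (simp only: eq)
    show ?thesis using f1 f2 f3 by measurable
  qed
  define Z where "Z = {w \<in> space (surface_measure \<Otimes>\<^sub>M ?P). ?g w = 0}"
  have Zs: "Z \<in> sets (surface_measure \<Otimes>\<^sub>M ?P)" unfolding Z_def using gm by measurable
  define Dg where "Dg = {p \<in> space ?P. fst p = snd p}"
  have Dgs: "Dg \<in> sets ?P"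
  proof -
    have mc: "measurable M N = measurable M borel" for M :: "('a \<times> 'a) measure"
      by (rule measurable_cong_sets[OF refl sN])
    have eq: "?P \<rightarrow>\<^sub>M N = ?P \<rightarrow>\<^sub>M borel" by (rule measurable_cong_sets[OF refl sN])
    have "fst \<in> ?P \<rightarrow>\<^sub>M N" "snd \<in> ?P \<rightarrow>\<^sub>M N" by measurable
    hence "fst \<in> borel_measurable ?P" "snd \<in> borel_measurable ?P" by (simp_all only: eq)
    hence "(\<lambda>p. fst p - snd p) \<in> borel_measurable ?P" by measurable
    hence "{p \<in> space ?P. fst p - snd p = 0} \<in> sets ?P" by measurable
    thus ?thesis unfolding Dg_def by simp
  qed
  have slice: "(\<lambda>z. (z, p)) -` Z = (if fst p = snd p then sphere 0 1 else {z \<in> sphere 0 1. z \<bullet> (fst p - snd p) = 0})"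
    if "p \<in> space ?P" for p
    using that unfolding Z_def by (auto simp: space_pair_measure surface_measure_facts(2) inner_commute)
  have "emeasure (surface_measure \<Otimes>\<^sub>M ?P) Z = (\<integral>\<^sup>+p. emeasure surface_measure ((\<lambda>z. (z, p)) -` Z) \<partial>?P)"
    by (rule SP.emeasure_pair_measure_alt2[OF Zs])
  also have "\<dots> = (\<integral>\<^sup>+p. emeasure (surface_measure::'a measure) (sphere 0 1) * indicator Dg p \<partial>?P)"
  proof (rule nn_integral_cong)
    fix p assume p: "p \<in> space ?P"
    show "emeasure surface_measure ((\<lambda>z. (z, p)) -` Z) = emeasure (surface_measure::'a measure) (sphere 0 1) * indicator Dg p"
    proof (cases "fst p = snd p")
      case True thus ?thesis using p slice[OF p] by (simp add: Dg_def indicator_def)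
    next
      case False
      hence "fst p - snd p \<noteq> 0" by simp
      thus ?thesis using p slice[OF p] False surface_null_great[of "fst p - snd p"] by (simp add: Dg_def indicator_def)
    qed
  qed
  also have "\<dots> = emeasure (surface_measure::'a measure) (sphere 0 1) * emeasure ?P Dg"
    using Dgs by (simp add: nn_integral_cmult_indicator)
  also have "emeasure ?P Dg = 0"
  proof -
    have "emeasure ?P Dg = (\<integral>\<^sup>+x. emeasure N (Pair x -` Dg) \<partial>N)"
      by (rule N.emeasure_pair_measure_alt[OF Dgs])
    also have "\<dots> = (\<integral>\<^sup>+x. 0 \<partial>N)"
    proof (rule nn_integral_cong)
      fix x assume "x \<in> space N"
      hence "Pair x -` Dg = {x}" unfolding Dg_def by (auto simp: space_pair_measure spN)
      thus "emeasure N (Pair x -` Dg) = 0" using dif by simp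
    qed
    finally show ?thesis by simp
  qed
  finally have Z0: "emeasure (surface_measure \<Otimes>\<^sub>M ?P) Z = 0" by simp
  have "emeasure (surface_measure \<Otimes>\<^sub>M ?P) Z = (\<integral>\<^sup>+z. emeasure ?P (Pair z -` Z) \<partial>surface_measure)"
    by (rule P.emeasure_pair_measure_alt[OF Zs])
  hence "(\<integral>\<^sup>+z. emeasure ?P (Pair z -` Z) \<partial>surface_measure) = 0" using Z0 by simp
  hence ae: "AE z in surface_measure. emeasure ?P (Pair z -` Z) = 0"
    by (subst (asm) nn_integral_0_iff_AE) (auto intro: SP.measurable_emeasure_Pair1[OF Zs])
  show ?thesis
  proof (rule AE_mp[OF ae], rule AE_I2, intro impI allI)
    fix z t assume z: "z \<in> space surface_measure" and e: "emeasure ?P (Pair z -` Z) = 0"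
    let ?H = "{x. x \<bullet> z = t}"
    have Hs: "?H \<in> sets N" using sN by simp
    have "?H \<times> ?H \<subseteq> Pair z -` Z"
      using z unfolding Z_def by (auto simp: space_pair_measure spN inner_diff_left)
    moreover have "Pair z -` Z \<in> sets ?P" using Zs by (rule sets_Pair1)
    ultimately have "emeasure ?P (?H \<times> ?H) \<le> 0" using e by (metis emeasure_mono)
    hence "emeasure N ?H * emeasure N ?H = 0" using N.emeasure_pair_measure_Times[OF Hs Hs] by simp
    thus "emeasure N ?H = 0" by simp
  qed
qed


locale cs = finite_measure N for N :: "'a::euclidean_space measure" +
  fixes K :: "'a set"
  assumes sN: "sets N = sets borel" and cK: "compact K" and nK: "emeasure N (- K) = 0"
begin

lemma spN: "space N = UNIV" using sN by (simp add: sets_eq_imp_space_eq)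

lemma AE_K: "AE x in N. x \<in> K"
proof (rule AE_I'[of "- K"])
  have "closed K" using cK by (rule compact_imp_closed)
  hence "- K \<in> sets N" using sN by (simp add: borel_open open_Compl)
  thus "- K \<in> null_sets N" using nK by (simp add: null_sets_def)
  show "{x \<in> space N. x \<notin> K} \<subseteq> - K" by auto
qed

lemma meas_cont: "continuous_on UNIV f \<Longrightarrow> f \<in> borel_measurable N"
  using borel_measurable_continuous_onI measurable_cong_sets[OF sN refl] by blast

lemma integrable_cont:
  fixes f :: "'a \<Rightarrow> real"
  assumes "continuous_on UNIV f" shows "integrable N f"
proof -
  have "compact (f ` K)" using assms cK by (metis compact_continuous_image continuous_on_subset top_greatest)
  then obtain B where B: "\<And>y. y \<in> f ` K \<Longrightarrow> norm y \<le> B" using compact_imp_bounded bounded_iff by metis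
  have "AE x in N. norm (f x) \<le> B" using AE_K by eventually_elim (use B in auto)
  thus ?thesis using meas_cont[OF assms] by (rule integrable_const_bound)
qed

lemma integral_close:
  fixes f g :: "'a \<Rightarrow> real"
  assumes "continuous_on UNIV f" "continuous_on UNIV g" "\<And>x. x \<in> K \<Longrightarrow> \<bar>f x - g x\<bar> < e"
  shows "\<bar>(\<integral>x. f x \<partial>N) - (\<integral>x. g x \<partial>N)\<bar> \<le> e * measure N (space N)"
proof -
  have i: "integrable N f" "integrable N g" using assms integrable_cont by auto
  have "(\<integral>x. f x \<partial>N) - (\<integral>x. g x \<partial>N) = (\<integral>x. f x - g x \<partial>N)" using i by simp
  also have "\<bar>\<dots>\<bar> \<le> (\<integral>x. \<bar>f x - g x\<bar> \<partial>N)" by (rule integral_abs_bound)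
  also have "\<dots> \<le> (\<integral>x. e \<partial>N)"
    by (rule integral_mono_AE) (use i AE_K assms(3) in \<open>auto elim!: eventually_mono intro: less_imp_le\<close>)
  also have "\<dots> = e * measure N (space N)" by simp
  finally show ?thesis .
qed

end

definition expsum :: "(real \<times> 'a) list \<Rightarrow> 'a::real_inner \<Rightarrow> real" where
  "expsum L x = sum_list (map (\<lambda>(a, w). a * exp (x \<bullet> w)) L)"

lemma expsum_simps[simp]: "expsum [] x = 0" "expsum ((a, w) # L) x = a * exp (x \<bullet> w) + expsum L x"
  "expsum (L1 @ L2) x = expsum L1 x + expsum L2 x"
  by (auto simp: expsum_def)

lemma expsum_scale: "expsum (map (\<lambda>(b, w). (a * b, v + w)) L) x = a * exp (x \<bullet> v) * expsum L x"
  by (induction L) (auto simp: algebra_simps inner_add_right exp_add)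

lemma expsum_mult: "expsum L1 x * expsum L2 x = expsum (concat (map (\<lambda>(a, v). map (\<lambda>(b, w). (a * b, v + w)) L2) L1)) x"
  by (induction L1) (auto simp: algebra_simps expsum_scale)

lemma expsum_cont: "continuous_on UNIV (expsum L)"
proof (induction L)
  case Nil thus ?case by (simp add: expsum_def[abs_def])
next
  case (Cons p L)
  obtain a w where p: "p = (a, w)" by (cases p)
  have "expsum (p # L) = (\<lambda>x. a * exp (x \<bullet> w) + expsum L x)" by (auto simp: p)
  thus ?case using Cons by (auto intro!: continuous_intros)
qed

lemma expsum_cont_at: "continuous_on UNIV (\<lambda>x. expsum L x)"
  using expsum_cont by (simp add: eta_contract_eq)

context cs begin

lemma integral_expsum: "(\<integral>x. expsum L x \<partial>N) = (\<Sum>(a, w)\<leftarrow>L. a * (\<integral>x. exp (x \<bullet> w) \<partial>N))"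
proof (induction L)
  case Nil thus ?case by simp
next
  case (Cons p L)
  obtain a w where p: "p = (a, w)" by (cases p)
  have c: "continuous_on UNIV (\<lambda>x. exp (x \<bullet> w))" by (auto intro!: continuous_intros)
  have i1: "integrable N (\<lambda>x. a * exp (x \<bullet> w))" using integrable_cont[OF c] by simp
  have i2: "integrable N (expsum L)" by (rule integrable_cont[OF expsum_cont])
  have "(\<integral>x. expsum (p # L) x \<partial>N) = (\<integral>x. a * exp (x \<bullet> w) + expsum L x \<partial>N)" by (simp add: p)
  also have "\<dots> = (\<integral>x. a * exp (x \<bullet> w) \<partial>N) + (\<integral>x. expsum L x \<partial>N)"
    using i1 i2 by (rule Bochner_Integration.integral_add)
  finally show ?case using Cons by (simp add: p)
qed

end

lemma cs_eq_from_exp: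
  fixes N1 N2 :: "'a::euclidean_space measure"
  assumes c1: "cs N1 K" and c2: "cs N2 K"
    and ex: "\<And>w. (\<integral>x. exp (x \<bullet> w) \<partial>N1) = (\<integral>x. exp (x \<bullet> w) \<partial>N2)"
  shows "N1 = N2"
proof -
  interpret A: cs N1 K by fact
  interpret B: cs N2 K by fact
  have es: "(\<integral>x. expsum L x \<partial>N1) = (\<integral>x. expsum L x \<partial>N2)" for L
    using ex by (simp add: A.integral_expsum B.integral_expsum)
  have fe: "(\<integral>x. f x \<partial>N1) = (\<integral>x. f x \<partial>N2)" if f: "continuous_on UNIV f" for f :: "'a \<Rightarrow> real"
  proof -
    let ?m = "measure N1 (space N1) + measure N2 (space N2)"
    have "\<bar>(\<integral>x. f x \<partial>N1) - (\<integral>x. f x \<partial>N2)\<bar> \<le> e * ?m" if e: "e > 0" for e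
    proof -
      let ?P = "\<lambda>g. \<exists>L. g = expsum L"
      obtain g where g: "?P g" "\<forall>x\<in>K. \<bar>f x - g x\<bar> < e"
      proof (rule exE[OF Stone_Weierstrass_HOL[of K ?P f e]])
        show "compact K" by (rule A.cK)
        show "?P (\<lambda>x. c)" for c by (rule exI[of _ "[(c, 0)]"]) (auto simp: fun_eq_iff)
        show "continuous_on K g" if "?P g" for g using that expsum_cont continuous_on_subset by blast
        show "?P (\<lambda>x. g x + h x)" if gh: "?P g \<and> ?P h" for g h
        proof -
          obtain L1 L2 where "g = expsum L1" "h = expsum L2" using gh by blast
          thus ?thesis by (intro exI[of _ "L1 @ L2"]) (simp add: fun_eq_iff)
        qed
        show "?P (\<lambda>x. g x * h x)" if gh: "?P g \<and> ?P h" for g h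
        proof -
          obtain L1 L2 where "g = expsum L1" "h = expsum L2" using gh by blast
          thus ?thesis by (intro exI[of _ "concat (map (\<lambda>(a, v). map (\<lambda>(b, w). (a * b, v + w)) L2) L1)"])
             (simp add: fun_eq_iff expsum_mult)
        qed
        show "\<exists>g. ?P g \<and> g x \<noteq> g y" if "x \<in> K \<and> y \<in> K \<and> x \<noteq> y" for x y
        proof (rule exI[of _ "expsum [(1, x - y)]"], intro conjI)
          show "?P (expsum [(1, x - y)])" by blast
          have "x \<bullet> (x - y) - y \<bullet> (x - y) = (x - y) \<bullet> (x - y)" by (simp add: inner_diff_left)
          also have "\<dots> > 0" using that by simp
          finally have "x \<bullet> (x - y) \<noteq> y \<bullet> (x - y)" by simp
          thus "expsum [(1, x - y)] x \<noteq> expsum [(1, x - y)] y" by simp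
        qed
        show "continuous_on K f" using f continuous_on_subset by blast
        show "0 < e" by fact
      qed auto
      then obtain L where L: "g = expsum L" by blast
      have gc: "continuous_on UNIV g" using L expsum_cont by simp
      have "\<bar>(\<integral>x. f x \<partial>N1) - (\<integral>x. g x \<partial>N1)\<bar> \<le> e * measure N1 (space N1)"
        using A.integral_close[OF f gc] g by auto
      moreover have "\<bar>(\<integral>x. f x \<partial>N2) - (\<integral>x. g x \<partial>N2)\<bar> \<le> e * measure N2 (space N2)"
        using B.integral_close[OF f gc] g by auto
      moreover have "(\<integral>x. g x \<partial>N1) = (\<integral>x. g x \<partial>N2)" using es L by simp
      ultimately show ?thesis by (simp add: algebra_simps)
    qed
    moreover have "?m \<ge> 0" by simp
    ultimately show ?thesis
    proof -
      assume h: "\<And>e. e > 0 \<Longrightarrow> \<bar>(\<integral>x. f x \<partial>N1) - (\<integral>x. f x \<partial>N2)\<bar> \<le> e * ?m"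
      have "\<bar>(\<integral>x. f x \<partial>N1) - (\<integral>x. f x \<partial>N2)\<bar> \<le> 0"
      proof (rule field_le_epsilon)
        fix e :: real assume "e > 0"
        moreover have "?m + 1 > 0" using \<open>?m \<ge> 0\<close> by linarith
        ultimately have ep: "e / (?m + 1) > 0" by (rule divide_pos_pos)
        hence "\<bar>(\<integral>x. f x \<partial>N1) - (\<integral>x. f x \<partial>N2)\<bar> \<le> e / (?m + 1) * ?m" by (rule h)
        also have "\<dots> \<le> e / (?m + 1) * (?m + 1)" using ep by (intro mult_left_mono) auto
        also have "\<dots> = e" using \<open>?m + 1 > 0\<close> by simp
        finally show "\<bar>(\<integral>x. f x \<partial>N1) - (\<integral>x. f x \<partial>N2)\<bar> \<le> 0 + e" by simp
      qed
      thus ?thesis by simp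
    qed
  qed
  have closed_eq: "emeasure N1 C = emeasure N2 C" if C: "closed C" for C
  proof (cases "C = {}")
    case True thus ?thesis by simp
  next
    case False
    define s where "s n x = max 0 (1 - real n * infdist x C)" for n x
    have sc: "continuous_on UNIV (s n)" for n unfolding s_def by (auto intro!: continuous_intros)
    have lim: "(\<lambda>n. s n x) \<longlonglongrightarrow> indicator C x" for x
    proof (cases "x \<in> C")
      case True
      hence "infdist x C = 0" by simp
      thus ?thesis using True by (simp add: s_def)
    next
      case xC: False
      hence "infdist x C > 0" using in_closed_iff_infdist_zero[OF C False] infdist_nonneg[of x C] by auto
      then obtain n0 :: nat where "real n0 * infdist x C > 1"
        by (metis reals_Archimedean3)
      have "s n x = 0" if "n \<ge> n0" for n
      proof -
        have "real n0 * infdist x C \<le> real n * infdist x C"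
          using that \<open>infdist x C > 0\<close> by (intro mult_right_mono) auto
        hence "1 - real n * infdist x C \<le> 0" using \<open>real n0 * infdist x C > 1\<close> by linarith
        thus ?thesis unfolding s_def by simp
      qed
      hence "\<forall>n\<ge>n0. s n x = 0" by blast
      thus ?thesis using xC by (auto intro!: tendsto_eventually simp: eventually_sequentially) blast
    qed
    have bnd: "norm (s n x) \<le> 1" for n x unfolding s_def using infdist_nonneg[of x C] by auto
    have Cs: "C \<in> sets borel" using C by simp
    have C1: "C \<in> sets N1" "C \<in> sets N2" using Cs A.sN B.sN by auto
    have t1: "(\<lambda>n. \<integral>x. s n x \<partial>N1) \<longlonglongrightarrow> (\<integral>x. indicator C x \<partial>N1)"
      apply (rule integral_dominated_convergence[where w="\<lambda>_. 1"])
      apply (rule borel_measurable_indicator[OF C1(1)])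
      apply (rule A.meas_cont[OF sc])
      apply simp
      apply (rule AE_I2, rule lim)
      by (rule AE_I2, rule bnd)
    have t2: "(\<lambda>n. \<integral>x. s n x \<partial>N2) \<longlonglongrightarrow> (\<integral>x. indicator C x \<partial>N2)"
      apply (rule integral_dominated_convergence[where w="\<lambda>_. 1"])
      apply (rule borel_measurable_indicator[OF C1(2)])
      apply (rule B.meas_cont[OF sc])
      apply simp
      apply (rule AE_I2, rule lim)
      by (rule AE_I2, rule bnd)
    have "(\<integral>x. s n x \<partial>N1) = (\<integral>x. s n x \<partial>N2)" for n using fe sc by blast
    hence "(\<integral>x. indicator C x \<partial>N1) = (\<integral>x. (indicator C x :: real) \<partial>N2)"
      using t1 t2 LIMSEQ_unique by fastforce
    hence "measure N1 C = measure N2 C" using C1 by simp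
    thus ?thesis using A.emeasure_eq_measure B.emeasure_eq_measure by simp
  qed
  have sb: "sets (borel::'a measure) = sigma_sets UNIV (Collect closed)"
    by (subst borel_eq_closed) simp
  show ?thesis
  proof (rule measure_eqI_generator_eq[of "Collect closed" UNIV _ _ "\<lambda>_. UNIV"])
    show "Int_stable (Collect closed)" by (auto simp: Int_stable_def)
    show "Collect closed \<subseteq> Pow UNIV" by simp
    show "emeasure N1 X = emeasure N2 X" if "X \<in> Collect closed" for X using that closed_eq by simp
    show "sets N1 = sigma_sets UNIV (Collect closed)" "sets N2 = sigma_sets UNIV (Collect closed)"
      using A.sN B.sN sb by simp_all
    show "range (\<lambda>_. UNIV) \<subseteq> Collect closed" by simp
    show "(\<Union>i::nat. UNIV) = (UNIV :: 'a set)" by simp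
    show "emeasure N1 UNIV \<noteq> \<infinity>" for i :: nat using A.emeasure_finite by simp
  qed
qed


context cs begin

lemma exp_cont_seq:
  assumes v: "v \<longlonglongrightarrow> w"
  shows "(\<lambda>k. \<integral>x. exp (x \<bullet> v k) \<partial>N) \<longlonglongrightarrow> (\<integral>x. exp (x \<bullet> w) \<partial>N)"
proof -
  obtain B where B: "B > 0" "\<And>k. norm (v k) \<le> B"
    using convergent_imp_Bseq[of v] v unfolding Bseq_def convergent_def by blast
  have "bounded K" using cK by (rule compact_imp_bounded)
  then obtain R where R: "\<And>x. x \<in> K \<Longrightarrow> norm x \<le> R" unfolding bounded_iff by blast
  have bnd: "AE x in N. norm (exp (x \<bullet> v k)) \<le> exp (R * B)" for k
    using AE_K
  proof eventually_elim
    case (elim x)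
    have "x \<bullet> v k \<le> norm x * norm (v k)" by (rule norm_cauchy_schwarz)
    moreover have "0 \<le> R" using R[OF elim] norm_ge_zero[of x] by linarith
    hence "norm x * norm (v k) \<le> R * B" using R[OF elim] B(2)[of k] by (intro mult_mono) auto
    ultimately have "x \<bullet> v k \<le> R * B" by linarith
    thus ?case by simp
  qed
  show ?thesis
    apply (rule integral_dominated_convergence[where w="\<lambda>_. exp (R * B)"])
    apply (rule meas_cont, intro continuous_intros)
    apply (rule meas_cont, intro continuous_intros)
    apply simp
    apply (rule AE_I2, intro tendsto_intros v)
    by (rule bnd)
qed

end

lemma exp_from_dirs:
  fixes N1 N2 :: "'a::euclidean_space measure"
  assumes c1: "cs N1 K" and c2: "cs N2 K"
    and ae: "AE z in surface_measure. \<forall>B\<in>sets borel. emeasure N1 {x. x \<bullet> z \<in> B} = emeasure N2 {x. x \<bullet> z \<in> B}"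
  shows "(\<integral>x. exp (x \<bullet> w) \<partial>N1) = (\<integral>x. exp (x \<bullet> w) \<partial>N2)"
proof -
  interpret A: cs N1 K by fact
  interpret B: cs N2 K by fact
  let ?G = "\<lambda>z. \<forall>B\<in>sets borel. emeasure N1 {x. x \<bullet> z \<in> B} = emeasure N2 {x. x \<bullet> z \<in> B}"
  obtain Nul where Nul: "{z \<in> space surface_measure. \<not> ?G z} \<subseteq> Nul" "emeasure surface_measure Nul = 0"
    "Nul \<in> sets (surface_measure :: 'a measure)"
    using ae by (rule AE_E)
  have sp: "space (surface_measure::'a measure) = sphere 0 1" by (rule surface_measure_facts(2))
  have good: "?G z" if "z \<in> sphere 0 1" "z \<notin> Nul" for z
    using that Nul(1) unfolding sp by blast
  have dense: "\<exists>z. z \<in> sphere 0 1 \<and> z \<notin> Nul \<and> norm (z - z0) < e" if z0: "z0 \<in> sphere 0 1" and e: "e > 0" for z0 :: 'a and e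
  proof (rule ccontr)
    assume "\<not> ?thesis"
    hence sub: "sphere 0 1 \<inter> ball z0 e \<subseteq> Nul" by (auto simp: dist_norm norm_minus_commute)
    have "emeasure (surface_measure :: 'a measure) (sphere 0 1 \<inter> ball z0 e) \<le> emeasure surface_measure Nul"
      using sub Nul(3) by (rule emeasure_mono)
    thus False using surface_cap_pos[OF z0 e] Nul(2) by simp
  qed
  have rdir: "(\<integral>x. exp (x \<bullet> (r *\<^sub>R z)) \<partial>N1) = (\<integral>x. exp (x \<bullet> (r *\<^sub>R z)) \<partial>N2)" if "?G z" for z r
  proof -
    have m1: "(\<lambda>x. x \<bullet> z) \<in> N1 \<rightarrow>\<^sub>M borel" by (rule A.meas_cont) (intro continuous_intros)
    have m2: "(\<lambda>x. x \<bullet> z) \<in> N2 \<rightarrow>\<^sub>M borel" by (rule B.meas_cont) (intro continuous_intros)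
    have d: "distr N1 borel (\<lambda>x. x \<bullet> z) = distr N2 borel (\<lambda>x. x \<bullet> z)"
    proof (rule measure_eqI)
      show "sets (distr N1 borel (\<lambda>x. x \<bullet> z)) = sets (distr N2 borel (\<lambda>x. x \<bullet> z))" by simp
      fix B assume "B \<in> sets (distr N1 borel (\<lambda>x. x \<bullet> z))"
      hence B: "B \<in> sets borel" by simp
      have "emeasure (distr N1 borel (\<lambda>x. x \<bullet> z)) B = emeasure N1 {x. x \<bullet> z \<in> B}"
        using emeasure_distr[OF m1 B] A.spN by (simp add: vimage_def)
      also have "\<dots> = emeasure N2 {x. x \<bullet> z \<in> B}" using that B by blast
      also have "\<dots> = emeasure (distr N2 borel (\<lambda>x. x \<bullet> z)) B"
        using emeasure_distr[OF m2 B] B.spN by (simp add: vimage_def)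
      finally show "emeasure (distr N1 borel (\<lambda>x. x \<bullet> z)) B = emeasure (distr N2 borel (\<lambda>x. x \<bullet> z)) B" .
    qed
    have g: "(\<lambda>t. exp (r * t)) \<in> borel_measurable borel" by measurable
    have "(\<integral>x. exp (x \<bullet> (r *\<^sub>R z)) \<partial>N1) = (\<integral>x. exp (r * (x \<bullet> z)) \<partial>N1)" by (simp add: mult.commute)
    also have "\<dots> = (\<integral>t. exp (r * t) \<partial>distr N1 borel (\<lambda>x. x \<bullet> z))" using integral_distr[OF m1 g] by simp
    also have "\<dots> = (\<integral>t. exp (r * t) \<partial>distr N2 borel (\<lambda>x. x \<bullet> z))" using d by simp
    also have "\<dots> = (\<integral>x. exp (r * (x \<bullet> z)) \<partial>N2)" using integral_distr[OF m2 g] by simp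
    also have "\<dots> = (\<integral>x. exp (x \<bullet> (r *\<^sub>R z)) \<partial>N2)" by (simp add: mult.commute)
    finally show ?thesis .
  qed
  show ?thesis
  proof (cases "w = 0")
    case True
    obtain b :: 'a where b: "b \<in> Basis" using nonempty_Basis by blast
    have "b \<in> sphere 0 1" using b by simp
    then obtain z where z: "z \<in> sphere 0 1" "z \<notin> Nul" using dense[of b 1] by auto
    show ?thesis using rdir[OF good[OF z], of 0] True by simp
  next
    case False
    define z0 where "z0 = w /\<^sub>R norm w"
    have z0: "z0 \<in> sphere 0 1" using False unfolding z0_def by simp
    have "\<forall>k::nat. \<exists>z. z \<in> sphere 0 1 \<and> z \<notin> Nul \<and> norm (z - z0) < 1 / real (Suc k)"
      using dense[OF z0] by simp
    then obtain zs where zs: "\<And>k. zs k \<in> sphere 0 1" "\<And>k. zs k \<notin> Nul" "\<And>k. norm (zs k - z0) < 1 / real (Suc k)"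
      by metis
    have "zs \<longlonglongrightarrow> z0"
    proof (rule LIMSEQ_I)
      fix r :: real assume "r > 0"
      then obtain k0 where k0: "inverse (real (Suc k0)) < r" using reals_Archimedean by blast
      show "\<exists>no. \<forall>n\<ge>no. norm (zs n - z0) < r"
      proof (intro exI allI impI)
        fix n assume "n \<ge> k0"
        hence "1 / real (Suc n) \<le> 1 / real (Suc k0)" by (simp add: frac_le)
        thus "norm (zs n - z0) < r" using zs(3)[of n] k0 by (simp add: inverse_eq_divide)
      qed
    qed
    hence v: "(\<lambda>k. norm w *\<^sub>R zs k) \<longlonglongrightarrow> norm w *\<^sub>R z0" by (intro tendsto_intros)
    have wz: "norm w *\<^sub>R z0 = w" using False unfolding z0_def by simp
    have "(\<lambda>k. \<integral>x. exp (x \<bullet> (norm w *\<^sub>R zs k)) \<partial>N1) \<longlonglongrightarrow> (\<integral>x. exp (x \<bullet> w) \<partial>N1)"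
      using A.exp_cont_seq[OF v] wz by simp
    moreover have "(\<lambda>k. \<integral>x. exp (x \<bullet> (norm w *\<^sub>R zs k)) \<partial>N2) \<longlonglongrightarrow> (\<integral>x. exp (x \<bullet> w) \<partial>N2)"
      using B.exp_cont_seq[OF v] wz by simp
    moreover have "(\<integral>x. exp (x \<bullet> (norm w *\<^sub>R zs k)) \<partial>N1) = (\<integral>x. exp (x \<bullet> (norm w *\<^sub>R zs k)) \<partial>N2)" for k
      using rdir[OF good[OF zs(1) zs(2)]] by blast
    ultimately show ?thesis using LIMSEQ_unique by fastforce
  qed
qed


lemma (in finite_measure) has_sum_singletons:
  assumes S: "countable S" and sing: "\<And>x. {x} \<in> sets M"
  shows "((\<lambda>x. measure M {x}) has_sum measure M S) S"
proof (cases "finite S")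
  case True
  have "measure M S = (\<Sum>x\<in>S. measure M {x})"
    using True sing by (intro measure_eq_sum_singleton) (auto simp: emeasure_finite)
  thus ?thesis using has_sum_finite[OF True] by simp
next
  case False
  let ?g = "from_nat_into S"
  have bij: "bij_betw ?g UNIV S" using S False by (rule bij_betw_from_nat_into)
  have "range (\<lambda>n. {?g n}) \<subseteq> sets M" using sing by auto
  moreover have "disjoint_family (\<lambda>n. {?g n})"
    using bij unfolding disjoint_family_on_def bij_betw_def inj_on_def by auto
  ultimately have "(\<lambda>n. measure M {?g n}) sums measure M (\<Union>n. {?g n})"
    by (rule finite_measure_UNION)
  moreover have "(\<Union>n. {?g n}) = S" using bij by (auto simp: bij_betw_def)
  ultimately have "(\<lambda>n. measure M {?g n}) sums measure M S" by simp
  hence "((\<lambda>n. measure M {?g n}) has_sum measure M S) UNIV" by (rule sums_nonneg_imp_has_sum) simp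
  thus ?thesis using has_sum_reindex_bij_betw[OF bij, of "\<lambda>x. measure M {x}"] by simp
qed

lemma core_real:
  fixes M1 M2 :: "'a::euclidean_space measure"
  assumes f1: "finite_measure M1" and f2: "finite_measure M2"
    and s1: "sets M1 = sets borel" and s2: "sets M2 = sets borel"
    and cK: "compact K" and n1: "emeasure M1 (- K) = 0" and n2: "emeasure M2 (- K) = 0"
    and ae: "AE z in surface_measure. \<exists>c::real \<Rightarrow> real. (\<lambda>t. norm (c t)) summable_on UNIV \<and>
       (\<forall>B\<in>sets borel. measure M1 {x. x \<bullet> z \<in> B} - measure M2 {x. x \<bullet> z \<in> B} = (\<Sum>\<^sub>\<infinity>t\<in>B. c t))"
  shows "(\<lambda>x. norm (measure M1 {x} - measure M2 {x})) summable_on UNIV"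
    and "\<And>A. A \<in> sets borel \<Longrightarrow> measure M1 A - measure M2 A = (\<Sum>\<^sub>\<infinity>x\<in>A. measure M1 {x} - measure M2 {x})"
proof -
  interpret M1: finite_measure M1 by fact
  interpret M2: finite_measure M2 by fact
  have sing1: "{x} \<in> sets M1" for x using s1 by simp
  have sing2: "{x} \<in> sets M2" for x using s2 by simp
  define A0 where "A0 = {x. measure M1 {x} \<noteq> 0} \<union> {x. measure M2 {x} \<noteq> 0}"
  have cA0: "countable A0" unfolding A0_def using M1.countable_support M2.countable_support by simp
  have A0b: "A0 \<in> sets borel" by (rule sets.countable[OF _ cA0]) auto
  define c where "c x = measure M1 {x} - measure M2 {x}" for x
  have c0: "c x = 0" if "x \<notin> A0" for x using that unfolding A0_def c_def by auto
  have hs: "(c has_sum (measure M1 S - measure M2 S)) S" if "S \<subseteq> A0" for S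
  proof -
    have cS: "countable S" using that cA0 countable_subset by blast
    have "((\<lambda>x. measure M1 {x} + (- measure M2 {x})) has_sum (measure M1 S + - measure M2 S)) S"
      by (intro has_sum_add has_sum_uminusI M1.has_sum_singletons M2.has_sum_singletons cS sing1 sing2)
    thus ?thesis unfolding c_def by simp
  qed
  have "((\<lambda>x. measure M1 {x} + measure M2 {x}) has_sum (measure M1 A0 + measure M2 A0)) A0"
    by (intro has_sum_add M1.has_sum_singletons M2.has_sum_singletons cA0 sing1 sing2)
  hence "(\<lambda>x. measure M1 {x} + measure M2 {x}) summable_on A0" by (rule has_sum_imp_summable)
  moreover have "norm (measure M1 {x} + measure M2 {x}) = measure M1 {x} + measure M2 {x}" for x by simp
  ultimately have "(\<lambda>x. norm (measure M1 {x} + measure M2 {x})) summable_on A0" by simp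
  hence "(\<lambda>x. norm (c x)) summable_on A0"
    by (rule Infinite_Sum.abs_summable_on_comparison_test) (use measure_nonneg[of M1] measure_nonneg[of M2] in \<open>auto simp: c_def abs_le_iff\<close>)
  thus "(\<lambda>x. norm (measure M1 {x} - measure M2 {x})) summable_on UNIV"
    unfolding c_def[symmetric] by (subst summable_on_cong_neutral[of A0 UNIV]) (auto simp: c0)
  define N1 where "N1 = density M1 (indicator (- A0))"
  define N2 where "N2 = density M2 (indicator (- A0))"
  have cA0s1: "- A0 \<in> sets M1" using A0b s1 by simp
  have cA0s2: "- A0 \<in> sets M2" using A0b s2 by simp
  have eN1: "emeasure N1 X = emeasure M1 (- A0 \<inter> X)" if "X \<in> sets borel" for X
    unfolding N1_def using cA0s1 that s1 by (intro emeasure_restricted) auto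
  have eN2: "emeasure N2 X = emeasure M2 (- A0 \<inter> X)" if "X \<in> sets borel" for X
    unfolding N2_def using cA0s2 that s2 by (intro emeasure_restricted) auto
  have sN1: "sets N1 = sets borel" unfolding N1_def using s1 by simp
  have sN2: "sets N2 = sets borel" unfolding N2_def using s2 by simp
  have fN1: "finite_measure N1"
    by (rule finite_measureI) (simp add: sets_eq_imp_space_eq[OF sN1] eN1 M1.emeasure_finite)
  have fN2: "finite_measure N2"
    by (rule finite_measureI) (simp add: sets_eq_imp_space_eq[OF sN2] eN2 M2.emeasure_finite)
  have dif1: "emeasure N1 {x} = 0" for x
  proof (cases "x \<in> A0")
    case True thus ?thesis by (simp add: eN1)
  next
    case False
    hence "measure M1 {x} = 0" unfolding A0_def by auto
    thus ?thesis using False by (simp add: eN1 M1.emeasure_eq_measure)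
  qed
  have dif2: "emeasure N2 {x} = 0" for x
  proof (cases "x \<in> A0")
    case True thus ?thesis by (simp add: eN2)
  next
    case False
    hence "measure M2 {x} = 0" unfolding A0_def by auto
    thus ?thesis using False by (simp add: eN2 M2.emeasure_eq_measure)
  qed
  have csN1: "cs N1 K"
  proof -
    interpret finite_measure N1 by (rule fN1)
    show ?thesis
    proof
      show "sets N1 = sets borel" by (rule sN1)
      show "compact K" by (rule cK)
      have "emeasure M1 (- A0 \<inter> - K) \<le> emeasure M1 (- K)"
        using cK s1 by (intro emeasure_mono) (auto intro!: borel_open simp: compact_imp_closed open_Compl)
      thus "emeasure N1 (- K) = 0" using n1 cK by (subst eN1) (auto intro!: borel_open simp: compact_imp_closed open_Compl)
    qed
  qed
  have csN2: "cs N2 K"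
  proof -
    interpret finite_measure N2 by (rule fN2)
    show ?thesis
    proof
      show "sets N2 = sets borel" by (rule sN2)
      show "compact K" by (rule cK)
      have "emeasure M2 (- A0 \<inter> - K) \<le> emeasure M2 (- K)"
        using cK s2 by (intro emeasure_mono) (auto intro!: borel_open simp: compact_imp_closed open_Compl)
      thus "emeasure N2 (- K) = 0" using n2 cK by (subst eN2) (auto intro!: borel_open simp: compact_imp_closed open_Compl)
    qed
  qed
  interpret N1: finite_measure N1 by (rule fN1)
  interpret N2: finite_measure N2 by (rule fN2)
  have stepB: "\<forall>B\<in>sets borel. emeasure N1 {x. x \<bullet> z \<in> B} = emeasure N2 {x. x \<bullet> z \<in> B}"
    if h1: "\<forall>t. emeasure N1 {x. x \<bullet> z = t} = 0" and h2: "\<forall>t. emeasure N2 {x. x \<bullet> z = t} = 0"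
      and cc: "\<exists>c::real \<Rightarrow> real. (\<lambda>t. norm (c t)) summable_on UNIV \<and>
       (\<forall>B\<in>sets borel. measure M1 {x. x \<bullet> z \<in> B} - measure M2 {x. x \<bullet> z \<in> B} = (\<Sum>\<^sub>\<infinity>t\<in>B. c t))" for z
  proof
    fix B :: "real set" assume B: "B \<in> sets borel"
    obtain c' where c': "(\<lambda>t. norm (c' t)) summable_on UNIV"
      "\<And>B. B \<in> sets borel \<Longrightarrow> measure M1 {x. x \<bullet> z \<in> B} - measure M2 {x. x \<bullet> z \<in> B} = (\<Sum>\<^sub>\<infinity>t\<in>B. c' t)"
      using cc by blast
    define T where "T = {t \<in> UNIV. c' t \<noteq> 0} \<union> (\<lambda>x. x \<bullet> z) ` A0"
    have cT: "countable T" unfolding T_def using abs_summable_countable[OF c'(1)] cA0 by simp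
    have Tb: "T \<in> sets borel" by (rule sets.countable[OF _ cT]) auto
    let ?pre = "\<lambda>S. {x. x \<bullet> z \<in> S}"
    have preb: "?pre S \<in> sets borel" if "S \<in> sets borel" for S :: "real set"
    proof -
      have "(\<lambda>x::'a. x \<bullet> z) \<in> borel_measurable borel" by measurable
      hence "(\<lambda>x::'a. x \<bullet> z) -` S \<inter> space borel \<in> sets borel" using that by (rule measurable_sets)
      thus ?thesis by (simp add: vimage_def)
    qed
    define B' where "B' = B - T"
    have B'b: "B' \<in> sets borel" unfolding B'_def using B Tb by auto
    have preT: "?pre T = (\<Union>t\<in>T. {x. x \<bullet> z = t})" by auto
    have null1: "?pre T \<in> null_sets N1"
      unfolding preT by (rule null_sets_UN'[OF cT]) (use h1 sN1 in \<open>auto simp: null_sets_def\<close>)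
    have null2: "?pre T \<in> null_sets N2"
      unfolding preT by (rule null_sets_UN'[OF cT]) (use h2 sN2 in \<open>auto simp: null_sets_def\<close>)
    have split: "?pre B = ?pre B' \<union> ?pre (B \<inter> T)" unfolding B'_def by auto
    have e1: "emeasure N1 (?pre B) = emeasure N1 (?pre B')"
    proof -
      have "?pre (B \<inter> T) \<in> null_sets N1" using null1 preb[of "B \<inter> T"] B Tb sN1
        by (intro null_sets_subset[OF null1]) auto
      thus ?thesis unfolding split using preb[OF B'b] sN1 by (simp add: emeasure_Un_null_set)
    qed
    have e2: "emeasure N2 (?pre B) = emeasure N2 (?pre B')"
    proof -
      have "?pre (B \<inter> T) \<in> null_sets N2" using null2 preb[of "B \<inter> T"] B Tb sN2
        by (intro null_sets_subset[OF null2]) auto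
      thus ?thesis unfolding split using preb[OF B'b] sN2 by (simp add: emeasure_Un_null_set)
    qed
    have disj: "- A0 \<inter> ?pre B' = ?pre B'" unfolding B'_def T_def by auto
    have "measure M1 (?pre B') - measure M2 (?pre B') = (\<Sum>\<^sub>\<infinity>t\<in>B'. c' t)" using c'(2)[OF B'b] .
    also have "\<dots> = 0" by (rule infsum_0) (auto simp: B'_def T_def)
    finally have "measure M1 (?pre B') = measure M2 (?pre B')" by simp
    hence "emeasure M1 (?pre B') = emeasure M2 (?pre B')" by (simp add: M1.emeasure_eq_measure M2.emeasure_eq_measure)
    hence "emeasure N1 (?pre B') = emeasure N2 (?pre B')" using preb[OF B'b] by (simp add: eN1 eN2 disj)
    thus "emeasure N1 (?pre B) = emeasure N2 (?pre B)" using e1 e2 by simp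
  qed
  have aeB: "AE z in surface_measure. \<forall>B\<in>sets borel. emeasure N1 {x. x \<bullet> z \<in> B} = emeasure N2 {x. x \<bullet> z \<in> B}"
    using diffuse_hyper[OF fN1 sN1 dif1] diffuse_hyper[OF fN2 sN2 dif2] ae
    by eventually_elim (rule stepB)
  have "N1 = N2"
    by (rule cs_eq_from_exp[OF csN1 csN2]) (rule exp_from_dirs[OF csN1 csN2 aeB])
  show "measure M1 A - measure M2 A = (\<Sum>\<^sub>\<infinity>x\<in>A. measure M1 {x} - measure M2 {x})" if A: "A \<in> sets borel" for A
  proof -
    have "emeasure M1 (- A0 \<inter> A) = emeasure M2 (- A0 \<inter> A)" using \<open>N1 = N2\<close> eN1[OF A] eN2[OF A] by simp
    hence eqd: "measure M1 (- A0 \<inter> A) = measure M2 (- A0 \<inter> A)"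
      by (simp add: M1.emeasure_eq_measure M2.emeasure_eq_measure)
    have AA0: "A \<inter> A0 \<in> sets borel" "- A0 \<inter> A \<in> sets borel" using A A0b by auto
    have Ae: "(A \<inter> A0) \<union> (- A0 \<inter> A) = A" by blast
    have "measure M1 ((A \<inter> A0) \<union> (- A0 \<inter> A)) = measure M1 (A \<inter> A0) + measure M1 (- A0 \<inter> A)"
      by (rule M1.finite_measure_Union) (use AA0 s1 in auto)
    hence d1: "measure M1 A = measure M1 (A \<inter> A0) + measure M1 (- A0 \<inter> A)" using Ae by simp
    have "measure M2 ((A \<inter> A0) \<union> (- A0 \<inter> A)) = measure M2 (A \<inter> A0) + measure M2 (- A0 \<inter> A)"
      by (rule M2.finite_measure_Union) (use AA0 s2 in auto)
    hence d2: "measure M2 A = measure M2 (A \<inter> A0) + measure M2 (- A0 \<inter> A)" using Ae by simp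
    have "(c has_sum (measure M1 (A \<inter> A0) - measure M2 (A \<inter> A0))) (A \<inter> A0)" by (rule hs) auto
    hence "(c has_sum (measure M1 (A \<inter> A0) - measure M2 (A \<inter> A0))) A"
      by (subst (asm) has_sum_cong_neutral[of A "A \<inter> A0" c c]) (auto simp: c0)
    hence "(\<Sum>\<^sub>\<infinity>x\<in>A. c x) = measure M1 (A \<inter> A0) - measure M2 (A \<inter> A0)" by (rule infsumI)
    thus ?thesis using d1 d2 eqd unfolding c_def by simp
  qed
qed


lemma pushforward_discrete:
  fixes c :: "'a \<Rightarrow> complex" and g :: "'a \<Rightarrow> 'b"
  assumes cs: "(\<lambda>x. norm (c x)) summable_on UNIV"
  shows "(\<lambda>t. norm (\<Sum>\<^sub>\<infinity>x\<in>{x. g x = t}. c x)) summable_on UNIV"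
    and "(\<Sum>\<^sub>\<infinity>x\<in>g -` B. c x) = (\<Sum>\<^sub>\<infinity>t\<in>B. \<Sum>\<^sub>\<infinity>x\<in>{x. g x = t}. c x)"
proof -
  have bij: "bij_betw (\<lambda>x. (g x, x)) (g -` B) (Sigma B (\<lambda>t. {x. g x = t}))" for B
    by (rule bij_betwI[where g=snd]) auto
  have sumsub: "c summable_on S" for S
    using abs_summable_summable[OF cs] by (rule summable_on_subset_banach) simp
  have nsumsub: "(\<lambda>x. norm (c x)) summable_on S" for S
    using cs by (rule summable_on_subset_banach) simp
  have s1: "(\<lambda>(t, x). c x) summable_on Sigma B (\<lambda>t. {x. g x = t})" for B
    using summable_on_reindex_bij_betw[OF bij[of B], of "\<lambda>(t, x). c x"] sumsub by simp
  have "(\<Sum>\<^sub>\<infinity>t\<in>B. \<Sum>\<^sub>\<infinity>x\<in>{x. g x = t}. c x) = (\<Sum>\<^sub>\<infinity>(t, x)\<in>Sigma B (\<lambda>t. {x. g x = t}). c x)"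
    using infsum_Sigma'_banach[of "\<lambda>t x. c x" B "\<lambda>t. {x. g x = t}"] s1 by simp
  also have "\<dots> = (\<Sum>\<^sub>\<infinity>x\<in>g -` B. c x)"
    using infsum_reindex_bij_betw[OF bij[of B], of "\<lambda>(t, x). c x"] by simp
  finally show "(\<Sum>\<^sub>\<infinity>x\<in>g -` B. c x) = (\<Sum>\<^sub>\<infinity>t\<in>B. \<Sum>\<^sub>\<infinity>x\<in>{x. g x = t}. c x)" by simp
  have s2: "(\<lambda>(t, x). norm (c x)) summable_on Sigma UNIV (\<lambda>t. {x. g x = t})"
    using summable_on_reindex_bij_betw[OF bij[of UNIV], of "\<lambda>(t, x). norm (c x)"] nsumsub by simp
  have d: "(\<lambda>t. \<Sum>\<^sub>\<infinity>x\<in>{x. g x = t}. norm (c x)) summable_on UNIV"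
    using summable_on_Sigma_banach[of "\<lambda>t x. norm (c x)" UNIV "\<lambda>t. {x. g x = t}"] s2 by simp
  have dn: "(\<lambda>t. norm (\<Sum>\<^sub>\<infinity>x\<in>{x. g x = t}. norm (c x))) summable_on UNIV"
  proof -
    have "norm (\<Sum>\<^sub>\<infinity>x\<in>{x. g x = t}. norm (c x)) = (\<Sum>\<^sub>\<infinity>x\<in>{x. g x = t}. norm (c x))" for t
      by (simp add: infsum_nonneg)
    thus ?thesis using d by simp
  qed
  show "(\<lambda>t. norm (\<Sum>\<^sub>\<infinity>x\<in>{x. g x = t}. c x)) summable_on UNIV"
  proof -
    show ?thesis
      apply (rule Infinite_Sum.abs_summable_on_comparison_test[OF dn])
      using norm_infsum_bound[OF nsumsub] by (simp add: infsum_nonneg)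
  qed
qed

lemma cm_decomp:
  fixes \<mu> :: "'a::euclidean_space set \<Rightarrow> complex"
  assumes cm: "complex_measure borel \<mu>" and sp: "compactly_supported_cmeasure \<mu>"
  obtains K M1 M2 M3 M4 where "compact K"
    "finite_measure M1" "finite_measure M2" "finite_measure M3" "finite_measure M4"
    "sets M1 = sets borel" "sets M2 = sets borel" "sets M3 = sets borel" "sets M4 = sets borel"
    "emeasure M1 (- K) = 0" "emeasure M2 (- K) = 0" "emeasure M3 (- K) = 0" "emeasure M4 (- K) = 0"
    "\<And>A. A \<in> sets borel \<Longrightarrow> Re (\<mu> A) = measure M1 A - measure M2 A"
    "\<And>A. A \<in> sets borel \<Longrightarrow> Im (\<mu> A) = measure M3 A - measure M4 A"
proof -
  obtain K where K: "compact K" "\<And>A. A \<in> sets borel \<Longrightarrow> A \<inter> K = {} \<Longrightarrow> \<mu> A = 0"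
    using sp unfolding compactly_supported_cmeasure_def by blast
  have ca: "(\<lambda>n. \<mu> (A n)) sums \<mu> (\<Union>n. A n)" if "range A \<subseteq> sets borel" "disjoint_family A" for A
    using cm that unfolding complex_measure_def by blast
  interpret R: sgnm borel "\<lambda>A. Re (\<mu> A)"
    by unfold_locales (rule sums_Re, rule ca)
  interpret I: sgnm borel "\<lambda>A. Im (\<mu> A)"
    by unfold_locales (rule sums_Im, rule ca)
  have cKb: "- K \<in> sets borel" using K(1) by (simp add: compact_imp_closed borel_open open_Compl)
  have null: "\<forall>B\<in>sets borel. B \<subseteq> - K \<longrightarrow> \<mu> B = 0" using K(2) by blast
  obtain M1 M2 where m12: "finite_measure M1" "finite_measure M2" "sets M1 = sets borel" "sets M2 = sets borel"
    "\<forall>A\<in>sets borel. Re (\<mu> A) = measure M1 A - measure M2 A"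
    "\<forall>A\<in>sets borel. (\<forall>B\<in>sets borel. B \<subseteq> A \<longrightarrow> Re (\<mu> B) = 0) \<longrightarrow> emeasure M1 A = 0 \<and> emeasure M2 A = 0"
    using R.jordan by blast
  obtain M3 M4 where m34: "finite_measure M3" "finite_measure M4" "sets M3 = sets borel" "sets M4 = sets borel"
    "\<forall>A\<in>sets borel. Im (\<mu> A) = measure M3 A - measure M4 A"
    "\<forall>A\<in>sets borel. (\<forall>B\<in>sets borel. B \<subseteq> A \<longrightarrow> Im (\<mu> B) = 0) \<longrightarrow> emeasure M3 A = 0 \<and> emeasure M4 A = 0"
    using I.jordan by blast
  have nR: "\<forall>B\<in>sets borel. B \<subseteq> - K \<longrightarrow> Re (\<mu> B) = 0" using null by simp
  have nI: "\<forall>B\<in>sets borel. B \<subseteq> - K \<longrightarrow> Im (\<mu> B) = 0" using null by simp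
  have e12: "emeasure M1 (- K) = 0 \<and> emeasure M2 (- K) = 0" using m12(6) cKb nR by blast
  have e34: "emeasure M3 (- K) = 0 \<and> emeasure M4 (- K) = 0" using m34(6) cKb nI by blast
  show ?thesis
    by (rule that[OF K(1) m12(1,2) m34(1,2) m12(3,4) m34(3,4) e12[THEN conjunct1] e12[THEN conjunct2]
          e34[THEN conjunct1] e34[THEN conjunct2]]) (use m12(5) m34(5) in auto)
qed


lemma disc_re:
  fixes \<nu> :: "real set \<Rightarrow> complex"
  assumes "discrete_cmeasure borel \<nu>"
  shows "\<exists>c::real\<Rightarrow>real. (\<lambda>t. norm (c t)) summable_on UNIV \<and> (\<forall>B\<in>sets borel. Re (\<nu> B) = (\<Sum>\<^sub>\<infinity>t\<in>B. c t))"
    and "\<exists>c::real\<Rightarrow>real. (\<lambda>t. norm (c t)) summable_on UNIV \<and> (\<forall>B\<in>sets borel. Im (\<nu> B) = (\<Sum>\<^sub>\<infinity>t\<in>B. c t))"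
proof -
  obtain c where c: "(\<lambda>x. norm (c x)) summable_on UNIV" "\<And>A. A \<in> sets borel \<Longrightarrow> \<nu> A = (\<Sum>\<^sub>\<infinity>x\<in>A. c x)"
    using assms unfolding discrete_cmeasure_def by blast
  have sB: "c summable_on B" for B
    using abs_summable_summable[OF c(1)] by (rule summable_on_subset_banach) simp
  show "\<exists>c::real\<Rightarrow>real. (\<lambda>t. norm (c t)) summable_on UNIV \<and> (\<forall>B\<in>sets borel. Re (\<nu> B) = (\<Sum>\<^sub>\<infinity>t\<in>B. c t))"
  proof (intro exI conjI ballI)
    show "(\<lambda>t. norm (Re (c t))) summable_on UNIV"
      by (rule Infinite_Sum.abs_summable_on_comparison_test[OF c(1)]) (simp add: abs_Re_le_cmod)
    fix B :: "real set" assume "B \<in> sets borel"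
    thus "Re (\<nu> B) = (\<Sum>\<^sub>\<infinity>t\<in>B. Re (c t))" using c(2) infsum_Re[OF sB] by simp
  qed
  show "\<exists>c::real\<Rightarrow>real. (\<lambda>t. norm (c t)) summable_on UNIV \<and> (\<forall>B\<in>sets borel. Im (\<nu> B) = (\<Sum>\<^sub>\<infinity>t\<in>B. c t))"
  proof (intro exI conjI ballI)
    show "(\<lambda>t. norm (Im (c t))) summable_on UNIV"
      by (rule Infinite_Sum.abs_summable_on_comparison_test[OF c(1)]) (simp add: abs_Im_le_cmod)
    fix B :: "real set" assume "B \<in> sets borel"
    thus "Im (\<nu> B) = (\<Sum>\<^sub>\<infinity>t\<in>B. Im (c t))" using c(2) infsum_Im[OF sB] by simp
  qed
qed

lemma preimage_borel:
  fixes z :: "'a::euclidean_space"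
  assumes "B \<in> sets borel"
  shows "{x::'a. x \<bullet> z \<in> B} \<in> sets borel"
proof -
  have "(\<lambda>x::'a. x \<bullet> z) \<in> borel_measurable borel" by measurable
  hence "(\<lambda>x::'a. x \<bullet> z) -` B \<inter> space borel \<in> sets borel" using assms by (rule measurable_sets)
  thus ?thesis by (simp add: vimage_def)
qed

lemma a_imp_b:
  fixes \<mu> :: "'a::euclidean_space set \<Rightarrow> complex"
  assumes "discrete_cmeasure borel \<mu>"
  shows "discrete_cmeasure borel (proj_cmeasure \<mu> z)"
proof -
  obtain c where c: "(\<lambda>x. norm (c x)) summable_on UNIV" "\<And>A. A \<in> sets borel \<Longrightarrow> \<mu> A = (\<Sum>\<^sub>\<infinity>x\<in>A. c x)"
    using assms unfolding discrete_cmeasure_def by blast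
  note pf = pushforward_discrete[OF c(1), of "\<lambda>x. x \<bullet> z"]
  show ?thesis unfolding discrete_cmeasure_def
  proof (intro exI conjI ballI)
    show "(\<lambda>t. norm (\<Sum>\<^sub>\<infinity>x\<in>{x. x \<bullet> z = t}. c x)) summable_on UNIV" by (rule pf(1))
    fix B :: "real set" assume B: "B \<in> sets borel"
    have "proj_cmeasure \<mu> z B = \<mu> {x. x \<bullet> z \<in> B}" by (simp add: proj_cmeasure_def)
    also have "\<dots> = (\<Sum>\<^sub>\<infinity>x\<in>(\<lambda>x. x \<bullet> z) -` B. c x)" using c(2)[OF preimage_borel[OF B]] by (simp add: vimage_def)
    also have "\<dots> = (\<Sum>\<^sub>\<infinity>t\<in>B. \<Sum>\<^sub>\<infinity>x\<in>{x. x \<bullet> z = t}. c x)" by (rule pf(2))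
    finally show "proj_cmeasure \<mu> z B = (\<Sum>\<^sub>\<infinity>t\<in>B. \<Sum>\<^sub>\<infinity>x\<in>{x. x \<bullet> z = t}. c x)" .
  qed
qed

lemma c_imp_a:
  fixes \<mu> :: "'a::euclidean_space set \<Rightarrow> complex"
  assumes cm: "complex_measure borel \<mu>" and sp: "compactly_supported_cmeasure \<mu>"
    and ae: "AE z in surface_measure. discrete_cmeasure borel (proj_cmeasure \<mu> z)"
  shows "discrete_cmeasure borel \<mu>"
proof -
  obtain K M1 M2 M3 M4 where K: "compact K"
    "finite_measure M1" "finite_measure M2" "finite_measure M3" "finite_measure M4"
    "sets M1 = sets borel" "sets M2 = sets borel" "sets M3 = sets borel" "sets M4 = sets borel"
    "emeasure M1 (- K) = 0" "emeasure M2 (- K) = 0" "emeasure M3 (- K) = 0" "emeasure M4 (- K) = 0"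
    and re: "\<And>A. A \<in> sets borel \<Longrightarrow> Re (\<mu> A) = measure M1 A - measure M2 A"
    and im: "\<And>A. A \<in> sets borel \<Longrightarrow> Im (\<mu> A) = measure M3 A - measure M4 A"
    using cm_decomp[OF cm sp] by blast
  have aeR: "AE z in surface_measure. \<exists>c::real \<Rightarrow> real. (\<lambda>t. norm (c t)) summable_on UNIV \<and>
       (\<forall>B\<in>sets borel. measure M1 {x. x \<bullet> z \<in> B} - measure M2 {x. x \<bullet> z \<in> B} = (\<Sum>\<^sub>\<infinity>t\<in>B. c t))"
    using ae
  proof eventually_elim
    case (elim z)
    then obtain c where "(\<lambda>t. norm (c t)) summable_on UNIV" "\<forall>B\<in>sets borel. Re (proj_cmeasure \<mu> z B) = (\<Sum>\<^sub>\<infinity>t\<in>B. c t)"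
      using disc_re(1) by blast
    thus ?case using re[OF preimage_borel] by (auto simp: proj_cmeasure_def)
  qed
  have aeI: "AE z in surface_measure. \<exists>c::real \<Rightarrow> real. (\<lambda>t. norm (c t)) summable_on UNIV \<and>
       (\<forall>B\<in>sets borel. measure M3 {x. x \<bullet> z \<in> B} - measure M4 {x. x \<bullet> z \<in> B} = (\<Sum>\<^sub>\<infinity>t\<in>B. c t))"
    using ae
  proof eventually_elim
    case (elim z)
    then obtain c where "(\<lambda>t. norm (c t)) summable_on UNIV" "\<forall>B\<in>sets borel. Im (proj_cmeasure \<mu> z B) = (\<Sum>\<^sub>\<infinity>t\<in>B. c t)"
      using disc_re(2) by blast
    thus ?case using im[OF preimage_borel] by (auto simp: proj_cmeasure_def)
  qed
  note cR = core_real[OF K(2,3,6,7,1,10,11) aeR]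
  note cI = core_real[OF K(4,5,8,9,1,12,13) aeI]
  have reS: "Re (\<mu> {x}) = measure M1 {x} - measure M2 {x}" for x by (rule re) simp
  have imS: "Im (\<mu> {x}) = measure M3 {x} - measure M4 {x}" for x by (rule im) simp
  have sR: "(\<lambda>x. norm (Re (\<mu> {x}))) summable_on UNIV" using cR(1) by (simp add: reS)
  have sI: "(\<lambda>x. norm (Im (\<mu> {x}))) summable_on UNIV" using cI(1) by (simp add: imS)
  have sRI: "(\<lambda>x. norm (Re (\<mu> {x})) + norm (Im (\<mu> {x}))) summable_on UNIV"
    by (rule summable_on_add[OF sR sI])
  have sRI': "(\<lambda>x. norm (norm (Re (\<mu> {x})) + norm (Im (\<mu> {x})))) summable_on UNIV"
    using sRI by simp
  have sN: "(\<lambda>x. norm (\<mu> {x})) summable_on UNIV"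
    by (rule Infinite_Sum.abs_summable_on_comparison_test[OF sRI']) (simp add: cmod_le)
  show ?thesis unfolding discrete_cmeasure_def
  proof (intro exI conjI ballI)
    show "(\<lambda>x. norm (\<mu> {x})) summable_on UNIV" by (rule sN)
    fix A :: "'a set" assume A: "A \<in> sets borel"
    have sAR: "(\<lambda>x. Re (\<mu> {x})) summable_on A"
      using abs_summable_summable[OF sR] by (rule summable_on_subset_banach) simp
    have sAI: "(\<lambda>x. Im (\<mu> {x})) summable_on A"
      using abs_summable_summable[OF sI] by (rule summable_on_subset_banach) simp
    have hR: "((\<lambda>x. Re (\<mu> {x})) has_sum Re (\<mu> A)) A"
    proof -
      have "Re (\<mu> A) = (\<Sum>\<^sub>\<infinity>x\<in>A. Re (\<mu> {x}))" using cR(2)[OF A] re[OF A] by (simp add: reS)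
      thus ?thesis using has_sum_infsum[OF sAR] by simp
    qed
    have hI: "((\<lambda>x. Im (\<mu> {x})) has_sum Im (\<mu> A)) A"
    proof -
      have "Im (\<mu> A) = (\<Sum>\<^sub>\<infinity>x\<in>A. Im (\<mu> {x}))" using cI(2)[OF A] im[OF A] by (simp add: imS)
      thus ?thesis using has_sum_infsum[OF sAI] by simp
    qed
    have "((\<lambda>x. complex_of_real (Re (\<mu> {x})) + \<i> * complex_of_real (Im (\<mu> {x})))
        has_sum (complex_of_real (Re (\<mu> A)) + \<i> * complex_of_real (Im (\<mu> A)))) A"
      by (intro has_sum_add has_sum_cmult_right has_sum_of_real hR hI)
    hence "((\<lambda>x. \<mu> {x}) has_sum \<mu> A) A" by (simp add: complex_eq[symmetric])
    thus "\<mu> A = (\<Sum>\<^sub>\<infinity>x\<in>A. \<mu> {x})" by (simp add: infsumI)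
  qed
qed

theorem corollary5p5:
  fixes \<mu> :: "'a::euclidean_space set \<Rightarrow> complex"
  assumes "complex_measure borel \<mu>"
    and "compactly_supported_cmeasure \<mu>"
  shows "(discrete_cmeasure borel \<mu> \<longleftrightarrow>
            (\<forall>\<zeta> \<in> sphere 0 1. discrete_cmeasure borel (proj_cmeasure \<mu> \<zeta>)))
       \<and> ((\<forall>\<zeta> \<in> sphere 0 1. discrete_cmeasure borel (proj_cmeasure \<mu> \<zeta>)) \<longleftrightarrow>
            (AE \<zeta> in surface_measure. discrete_cmeasure borel (proj_cmeasure \<mu> \<zeta>)))"
proof -
  have sp: "space (surface_measure::'a measure) = sphere 0 1" by (rule surface_measure_facts(2))
  have bc: "(\<forall>\<zeta> \<in> sphere 0 1. discrete_cmeasure borel (proj_cmeasure \<mu> \<zeta>)) \<Longrightarrow>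
            (AE \<zeta> in surface_measure. discrete_cmeasure borel (proj_cmeasure \<mu> \<zeta>))"
    by (rule AE_I2) (simp add: sp)
  have ca: "(AE \<zeta> in surface_measure. discrete_cmeasure borel (proj_cmeasure \<mu> \<zeta>)) \<Longrightarrow> discrete_cmeasure borel \<mu>"
    by (rule c_imp_a[OF assms])
  have ab: "discrete_cmeasure borel \<mu> \<Longrightarrow> (\<forall>\<zeta> \<in> sphere 0 1. discrete_cmeasure borel (proj_cmeasure \<mu> \<zeta>))"
    using a_imp_b by blast
  show ?thesis using ab bc ca by blast
qed


end
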